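(* Let $K\ge2$, $n\in\mathbb R$, $\sigma>0$, $\tau>0$, $\alpha_i>0$, $\beta_i>0$, $\gamma_i>0$ ($i=1,\dots,K$). Then $$I_n^\sigma(\boldsymbol\alpha,\boldsymbol\gamma)=\tau^{K-1}\Big(\prod_{l=1}^K\beta_l^{\alpha_l}\Big)\int_{S_K}\mathrm d^{K-1}x\,\frac{\big(\sum_{k=1}^K\beta_k^\sigma\gamma_k x_k^{\sigma\tau}\big)^n\prod_{i=1}^K x_i^{\tau\alpha_i-1}}{\big(\sum_{j=1}^K\beta_j x_j^\tau\big)^{\alpha_++\sigma n}}.$$ In particular, $$I_n^\sigma(\boldsymbol\alpha,\boldsymbol\gamma)=\frac{1}{\sigma^{K-1}\prod_{l=1}^K\gamma_l^{\alpha_l/\sigma}}\int_{S_K}\mathrm d^{K-1}x\,\frac{\prod_{i=1}^K x_i^{\alpha_i/\sigma-1}}{\big(\sum_{j=1}^K x_j^{1/\sigma}/\gamma_j^{1/\sigma}\big)^{\alpha_++\sigma n}}.$$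
   Context: $S_K=\{\mathbf x\in\mathbb R^K:\sum_i x_i=1,\ x_i\ge0\}$; $\int_{S_K}\mathrm d^{K-1}x$ denotes the Lebesgue integral in $(x_1,\dots,x_{K-1})$ over $\{x_i\ge0,\sum_{i<K}x_i\le1\}$ with $x_K=1-\sum_{i<K}x_i$. For real $n$, $I_n^\sigma(\boldsymbol\alpha,\boldsymbol\gamma)=\int_{S_K}\mathrm d^{K-1}y\,\big(\sum_k\gamma_k y_k^\sigma\big)^n\prod_i y_i^{\alpha_i-1}$, and $\alpha_+=\sum_i\alpha_i$. *)

theory Defs
  imports "HOL-Analysis.Analysis"
begin

text \<open>Points of the simplex S_K are indexed by 0..K-1. The integral over S_K is the
Lebesgue integral over the first K-1 coordinates y_0..y_(K-2), ranging over
y_i >= 0, sum y_i <= 1, with the last coordinate y_(K-1) = 1 - sum of the others.\<close>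

definition simplex_dom :: "nat \<Rightarrow> (nat \<Rightarrow> real) set" where
  "simplex_dom K = {y. (\<forall>i<K - 1. 0 \<le> y i) \<and> (\<Sum>i<K - 1. y i) \<le> 1}"

definition simplex_pt :: "nat \<Rightarrow> (nat \<Rightarrow> real) \<Rightarrow> (nat \<Rightarrow> real)" where
  "simplex_pt K y = (\<lambda>i. if i < K - 1 then y i else 1 - (\<Sum>j<K - 1. y j))"

definition simplex_integral :: "nat \<Rightarrow> ((nat \<Rightarrow> real) \<Rightarrow> real) \<Rightarrow> real" where
  "simplex_integral K f =
     (LINT y : simplex_dom K | PiM {..<K - 1} (\<lambda>_. lborel). f (simplex_pt K y))"

definition I_int :: "nat \<Rightarrow> real \<Rightarrow> real \<Rightarrow> (nat \<Rightarrow> real) \<Rightarrow> (nat \<Rightarrow> real) \<Rightarrow> real" where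
  "I_int K \<sigma> n \<alpha> \<gamma> = simplex_integral K
     (\<lambda>y. (\<Sum>k<K. \<gamma> k * y k powr \<sigma>) powr n * (\<Prod>i<K. y i powr (\<alpha> i - 1)))"

end

theory Submission
  imports Defs "HOL-Real_Asymp.Real_Asymp"
begin


lemma sup_lim_eq:
  fixes X :: "nat \<Rightarrow> ennreal"
  assumes "incseq X" "eventually (\<lambda>n. X n = L) sequentially"
  shows "(SUP n. X n) = L"
proof -
  have "X \<longlonglongrightarrow> (SUP n. X n)" using assms(1) by (rule LIMSEQ_SUP)
  moreover have "X \<longlonglongrightarrow> L" using assms(2) by (simp add: tendsto_eventually)
  ultimately show ?thesis using LIMSEQ_unique by blast
qed

lemma subst_pow:
  fixes f :: "real \<Rightarrow> real" and b t :: real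
  assumes b: "b > 0" and t: "t > 0" and [measurable]: "f \<in> borel_measurable borel"
  shows "(\<integral>\<^sup>+x. ennreal (f x) * indicator {0<..} x \<partial>lborel) =
         (\<integral>\<^sup>+x. ennreal (f (b * x powr t) * (b * t * x powr (t - 1))) * indicator {0<..} x \<partial>lborel)"
proof -
  define g where "g x = b * x powr t" for x
  define g' where "g' x = b * t * x powr (t - 1)" for x
  define a where "a n = 1 / real (Suc n)" for n
  define c where "c n = real (Suc n)" for n
  have apos: "a n > 0" for n by (simp add: a_def)
  have ac: "a n \<le> c n" for n
  proof -
    have "a n \<le> 1" by (simp add: a_def)
    moreover have "1 \<le> c n" by (simp add: c_def)
    ultimately show ?thesis by linarith
  qed
  have gmono: "0 \<le> x \<Longrightarrow> x \<le> y \<Longrightarrow> g x \<le> g y" for x y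
    using b t by (simp add: g_def powr_mono2)
  have gpos: "x > 0 \<Longrightarrow> g x > 0" for x using b by (simp add: g_def)
  have step: "(\<integral>\<^sup>+x. ennreal (f x) * indicator {g (a n)..g (c n)} x \<partial>lborel) =
        (\<integral>\<^sup>+x. ennreal (f (g x) * g' x) * indicator {a n..c n} x \<partial>lborel)" for n
  proof -
    have "(\<integral>\<^sup>+x. ennreal (f x * indicator {g (a n)..g (c n)} x) \<partial>lborel) =
        (\<integral>\<^sup>+x. ennreal (f (g x) * g' x * indicator {a n..c n} x) \<partial>lborel)"
    proof (rule nn_integral_substitution)
      show "set_borel_measurable borel {g (a n)..g (c n)} f"
        unfolding set_borel_measurable_def by measurable
      show "(g has_real_derivative g' x) (at x)" if "x \<in> {a n..c n}" for x
      proof -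
        have "x > 0" using that apos[of n] by auto
        then show ?thesis unfolding g_def g'_def
          using DERIV_cmult[OF has_real_derivative_powr[of x t], of b] by (simp add: mult.assoc)
      qed
      show "continuous_on {a n..c n} g'"
        unfolding g'_def using apos[of n] by (intro continuous_intros) auto
      show "0 \<le> g' x" if "x \<in> {a n..c n}" for x using b t by (simp add: g'_def)
      show "a n \<le> c n" by (rule ac)
    qed
    moreover have eq: "\<And>u A x. ennreal (u * indicator A x) = ennreal u * (indicator A x :: ennreal)"
      by (auto simp: indicator_def)
    ultimately show ?thesis unfolding eq by simp
  qed
  have lim1: "((\<lambda>n. g (a n)) \<longlongrightarrow> 0) sequentially"
    unfolding g_def a_def using b t by real_asymp
  have lim2: "filterlim (\<lambda>n. g (c n)) at_top sequentially"
    unfolding g_def c_def using b t by real_asymp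
  have lim3: "((\<lambda>n. a n) \<longlongrightarrow> 0) sequentially"
    unfolding a_def by real_asymp
  have lim4: "filterlim (\<lambda>n. c n) at_top sequentially"
    unfolding c_def by real_asymp
  have amono: "a m \<le> a n" if "n \<le> m" for n m using that by (simp add: a_def frac_le)
  have cmono: "c n \<le> c m" if "n \<le> m" for n m using that by (simp add: c_def)
  have L: "(\<integral>\<^sup>+x. ennreal (f x) * indicator {0<..} x \<partial>lborel) =
     (SUP n. \<integral>\<^sup>+x. ennreal (f x) * indicator {g (a n)..g (c n)} x \<partial>lborel)"
  proof -
    have "(\<integral>\<^sup>+x. ennreal (f x) * indicator {0<..} x \<partial>lborel) =
      (\<integral>\<^sup>+x. (SUP n. ennreal (f x) * indicator {g (a n)..g (c n)} x) \<partial>lborel)"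
    proof (rule nn_integral_cong)
      fix x :: real
      show "ennreal (f x) * indicator {0<..} x = (SUP n. ennreal (f x) * indicator {g (a n)..g (c n)} x)"
      proof (rule sup_lim_eq[symmetric])
        show "incseq (\<lambda>n. ennreal (f x) * indicator {g (a n)..g (c n)} x)"
        proof (rule incseq_SucI)
          fix n
          have "g (a (Suc n)) \<le> g (a n)" using apos[of "Suc n"] amono[of n "Suc n"] gmono[of "a (Suc n)" "a n"] by auto
          moreover have "g (c n) \<le> g (c (Suc n))" using cmono[of n "Suc n"] gmono[of "c n" "c (Suc n)"]
            by (simp add: c_def)
          ultimately show "ennreal (f x) * indicator {g (a n)..g (c n)} x \<le>
             ennreal (f x) * indicator {g (a (Suc n))..g (c (Suc n))} x"
            by (intro mult_left_mono) (auto simp: indicator_def)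
        qed
        show "\<forall>\<^sub>F n in sequentially. ennreal (f x) * indicator {g (a n)..g (c n)} x =
             ennreal (f x) * indicator {0<..} x"
        proof (cases "x > 0")
          case True
          have "eventually (\<lambda>n. g (a n) < x) sequentially"
            using lim1 True by (simp add: order_tendstoD)
          moreover have "eventually (\<lambda>n. g (c n) > x) sequentially"
            using lim2 by (simp add: filterlim_at_top_dense)
          ultimately show ?thesis
            by eventually_elim (use True in \<open>auto simp: indicator_def\<close>)
        next
          case False
          have "\<And>n. \<not> g (a n) \<le> x" using gpos[OF apos] False by (meson less_le_trans not_le)
          then show ?thesis using False by (auto simp: indicator_def)
        qed
      qed
    qed
    also have "\<dots> = (SUP n. \<integral>\<^sup>+x. ennreal (f x) * indicator {g (a n)..g (c n)} x \<partial>lborel)"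
    proof (rule nn_integral_monotone_convergence_SUP)
      show "incseq (\<lambda>n x. ennreal (f x) * indicator {g (a n)..g (c n)} x)"
      proof (rule incseq_SucI, rule le_funI)
        fix n x
        have "g (a (Suc n)) \<le> g (a n)" using apos[of "Suc n"] amono[of n "Suc n"] gmono[of "a (Suc n)" "a n"] by auto
        moreover have "g (c n) \<le> g (c (Suc n))" using cmono[of n "Suc n"] gmono[of "c n" "c (Suc n)"]
          by (simp add: c_def)
        ultimately show "ennreal (f x) * indicator {g (a n)..g (c n)} x \<le>
           ennreal (f x) * indicator {g (a (Suc n))..g (c (Suc n))} x"
          by (intro mult_left_mono) (auto simp: indicator_def)
      qed
    qed measurable
    finally show ?thesis .
  qed
  have R: "(\<integral>\<^sup>+x. ennreal (f (g x) * g' x) * indicator {0<..} x \<partial>lborel) =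
     (SUP n. \<integral>\<^sup>+x. ennreal (f (g x) * g' x) * indicator {a n..c n} x \<partial>lborel)"
  proof -
    have "(\<integral>\<^sup>+x. ennreal (f (g x) * g' x) * indicator {0<..} x \<partial>lborel) =
      (\<integral>\<^sup>+x. (SUP n. ennreal (f (g x) * g' x) * indicator {a n..c n} x) \<partial>lborel)"
    proof (rule nn_integral_cong)
      fix x :: real
      show "ennreal (f (g x) * g' x) * indicator {0<..} x = (SUP n. ennreal (f (g x) * g' x) * indicator {a n..c n} x)"
      proof (rule sup_lim_eq[symmetric])
        show "incseq (\<lambda>n. ennreal (f (g x) * g' x) * indicator {a n..c n} x)"
        proof (rule incseq_SucI)
          fix n
          show "ennreal (f (g x) * g' x) * indicator {a n..c n} x \<le>
             ennreal (f (g x) * g' x) * indicator {a (Suc n)..c (Suc n)} x"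
            using amono[of n "Suc n"] cmono[of n "Suc n"]
            by (intro mult_left_mono) (auto simp: indicator_def)
        qed
        show "\<forall>\<^sub>F n in sequentially. ennreal (f (g x) * g' x) * indicator {a n..c n} x =
             ennreal (f (g x) * g' x) * indicator {0<..} x"
        proof (cases "x > 0")
          case True
          have "eventually (\<lambda>n. a n < x) sequentially"
            using lim3 True by (simp add: order_tendstoD)
          moreover have "eventually (\<lambda>n. c n > x) sequentially"
            using lim4 by (simp add: filterlim_at_top_dense)
          ultimately show ?thesis
            by eventually_elim (use True in \<open>auto simp: indicator_def\<close>)
        next
          case False
          have "\<And>n. \<not> a n \<le> x" using apos False by (meson less_le_trans not_le)
          then show ?thesis using False by (auto simp: indicator_def)
        qed
      qed
    qed
    also have "\<dots> = (SUP n. \<integral>\<^sup>+x. ennreal (f (g x) * g' x) * indicator {a n..c n} x \<partial>lborel)"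
    proof (rule nn_integral_monotone_convergence_SUP)
      show "incseq (\<lambda>n x. ennreal (f (g x) * g' x) * indicator {a n..c n} x)"
      proof (rule incseq_SucI, rule le_funI)
        fix n x
        show "ennreal (f (g x) * g' x) * indicator {a n..c n} x \<le>
           ennreal (f (g x) * g' x) * indicator {a (Suc n)..c (Suc n)} x"
          using amono[of n "Suc n"] cmono[of n "Suc n"]
          by (intro mult_left_mono) (auto simp: indicator_def)
      qed
    qed (unfold g_def g'_def, measurable)
    finally show ?thesis .
  qed
  show ?thesis using L R step by (simp add: g_def g'_def)
qed



lemma upd_meas:
  assumes "i \<notin> I"
  shows "(\<lambda>v. v(i := y)) \<in> measurable (PiM I (\<lambda>_. lborel)) (PiM (insert i I) (\<lambda>_. lborel))"
proof (rule measurable_PiM_single')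
  fix j assume "j \<in> insert i I"
  then show "(\<lambda>v. (v(i := y)) j) \<in> measurable (PiM I (\<lambda>_. lborel)) lborel"
    by (cases "j = i") auto
next
  show "(\<lambda>v. v(i := y)) \<in> space (PiM I (\<lambda>_. lborel)) \<rightarrow> (\<Pi>\<^sub>E j\<in>insert i I. space lborel)"
    by (auto simp: space_PiM PiE_def extensional_def)
qed

lemma diag_subst:
  fixes I :: "nat set" and T :: "nat \<Rightarrow> real \<Rightarrow> real" and D :: "nat \<Rightarrow> real \<Rightarrow> ennreal"
  assumes "finite I"
   and "\<And>i. i \<in> I \<Longrightarrow> T i \<in> borel_measurable borel"
   and "\<And>i. i \<in> I \<Longrightarrow> D i \<in> borel_measurable borel"
   and "\<And>i f. i \<in> I \<Longrightarrow> f \<in> borel_measurable borel \<Longrightarrow>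
          (\<integral>\<^sup>+x. f x \<partial>lborel) = (\<integral>\<^sup>+x. f (T i x) * D i x \<partial>lborel)"
   and "F \<in> borel_measurable (PiM I (\<lambda>_. lborel))"
  shows "(\<integral>\<^sup>+x. F x \<partial>PiM I (\<lambda>_. lborel)) =
    (\<integral>\<^sup>+x. F (\<lambda>i\<in>I. T i (x i)) * (\<Prod>i\<in>I. D i (x i)) \<partial>PiM I (\<lambda>_. lborel))"
  using assms
proof (induction I arbitrary: F rule: finite_induct)
  case empty
  interpret product_sigma_finite "\<lambda>_. lborel" by standard
  show ?case by (simp add: PiM_empty nn_integral_count_space_finite)
next
  case (insert i I F)
  interpret product_sigma_finite "\<lambda>_. lborel" by standard
  interpret PI: sigma_finite_measure "PiM I (\<lambda>_. lborel)" using sigma_finite insert by simp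
  note [measurable] = insert.prems(4)
  have Tm[measurable]: "T j \<in> borel_measurable borel" if "j \<in> insert i I" for j using insert.prems(1) that by blast
  have Dm[measurable]: "D j \<in> borel_measurable borel" if "j \<in> insert i I" for j using insert.prems(2) that by blast
  have Tm': "(\<lambda>x. T j (x j)) \<in> borel_measurable (PiM J (\<lambda>_. lborel))" if "j \<in> insert i I" "j \<in> J" for j J
    using that by measurable
  define H where "H y = (\<integral>\<^sup>+x. F ((\<lambda>j\<in>I. T j (x j))(i := y)) * (\<Prod>j\<in>I. D j (x j)) \<partial>PiM I (\<lambda>_. lborel))" for y
  have Rm: "(\<lambda>x. F ((\<lambda>j\<in>I. T j (x j))(i := y))) \<in> borel_measurable (PiM I (\<lambda>_. lborel))" for y
  proof -
    have "(\<lambda>x. (\<lambda>j\<in>I. T j (x j))) \<in> measurable (PiM I (\<lambda>_. lborel)) (PiM I (\<lambda>_. lborel))"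
      by (rule measurable_restrict) (use Tm' in auto)
    moreover have "(\<lambda>v. v(i := y)) \<in> measurable (PiM I (\<lambda>_. lborel)) (PiM (insert i I) (\<lambda>_. lborel))"
      using insert.hyps by (intro upd_meas) auto
    ultimately show ?thesis using insert.prems(4) by (simp add: measurable_comp[unfolded comp_def])
  qed
  have Hm: "H \<in> borel_measurable borel"
  proof -
    have "(\<lambda>(y, x). F ((\<lambda>j\<in>I. T j (x j))(i := y)) * (\<Prod>j\<in>I. D j (x j)))
        \<in> borel_measurable (borel \<Otimes>\<^sub>M PiM I (\<lambda>_. lborel))"
    proof -
      have "(\<lambda>(y, x). (\<lambda>j\<in>I. T j (x j))(i := y)) \<in> measurable (borel \<Otimes>\<^sub>M PiM I (\<lambda>_. lborel)) (PiM (insert i I) (\<lambda>_. lborel))"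
      proof (rule measurable_PiM_single')
        fix j assume "j \<in> insert i I"
        then show "(\<lambda>\<omega>. (case \<omega> of (y, x) \<Rightarrow> (\<lambda>j\<in>I. T j (x j))(i := y)) j) \<in> measurable (borel \<Otimes>\<^sub>M PiM I (\<lambda>_. lborel)) lborel"
          using insert.hyps by (cases "j = i") (auto simp: case_prod_beta)
      next
        show "(\<lambda>\<omega>. case \<omega> of (y, x) \<Rightarrow> (\<lambda>j\<in>I. T j (x j))(i := y)) \<in> space (borel \<Otimes>\<^sub>M Pi\<^sub>M I (\<lambda>_. lborel)) \<rightarrow> (\<Pi>\<^sub>E i\<in>insert i I. space lborel)"
          by (auto simp: space_pair_measure space_PiM PiE_def extensional_def)
      qed
      then show ?thesis by measurable
    qed
    then show ?thesis unfolding H_def by (rule PI.borel_measurable_nn_integral)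
  qed
  have "(\<integral>\<^sup>+x. F x \<partial>PiM (insert i I) (\<lambda>_. lborel)) =
      (\<integral>\<^sup>+y. (\<integral>\<^sup>+x. F (x(i := y)) \<partial>PiM I (\<lambda>_. lborel)) \<partial>lborel)"
    using insert.hyps by (intro product_nn_integral_insert_rev) auto
  also have "\<dots> = (\<integral>\<^sup>+y. H y \<partial>lborel)"
  proof (rule nn_integral_cong)
    fix y :: real
    have m: "(\<lambda>x. F (x(i := y))) \<in> borel_measurable (PiM I (\<lambda>_. lborel))"
    proof -
      have "(\<lambda>v. v(i := y)) \<in> measurable (PiM I (\<lambda>_. lborel)) (PiM (insert i I) (\<lambda>_. lborel))"
        using insert.hyps by (intro upd_meas) auto
      then show ?thesis using insert.prems(4) by (simp add: measurable_comp[unfolded comp_def])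
    qed
    have "(\<integral>\<^sup>+x. F (x(i := y)) \<partial>PiM I (\<lambda>_. lborel)) =
      (\<integral>\<^sup>+x. F ((\<lambda>j\<in>I. T j (x j))(i := y)) * (\<Prod>j\<in>I. D j (x j)) \<partial>PiM I (\<lambda>_. lborel))"
      using insert.IH[of "\<lambda>x. F (x(i := y))"] insert.prems m by (auto simp: restrict_def)
    then show "(\<integral>\<^sup>+x. F (x(i := y)) \<partial>PiM I (\<lambda>_. lborel)) = H y" by (simp add: H_def)
  qed
  also have "\<dots> = (\<integral>\<^sup>+y. H (T i y) * D i y \<partial>lborel)"
    using insert.prems(3)[of i H] Hm by simp
  also have "\<dots> = (\<integral>\<^sup>+y. (\<integral>\<^sup>+x. F (\<lambda>j\<in>insert i I. T j ((x(i := y)) j)) *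
        (\<Prod>j\<in>insert i I. D j ((x(i := y)) j)) \<partial>PiM I (\<lambda>_. lborel)) \<partial>lborel)"
  proof (rule nn_integral_cong)
    fix y
    have "(\<integral>\<^sup>+x. F (\<lambda>j\<in>insert i I. T j ((x(i := y)) j)) *
        (\<Prod>j\<in>insert i I. D j ((x(i := y)) j)) \<partial>PiM I (\<lambda>_. lborel)) =
       (\<integral>\<^sup>+x. F ((\<lambda>j\<in>I. T j (x j))(i := T i y)) * (\<Prod>j\<in>I. D j (x j)) * D i y \<partial>PiM I (\<lambda>_. lborel))"
    proof (rule nn_integral_cong)
      fix x
      have e1: "(\<lambda>j\<in>insert i I. T j ((x(i := y)) j)) = (\<lambda>j\<in>I. T j (x j))(i := T i y)"
        using insert.hyps by (auto simp: fun_eq_iff)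
      have e2: "(\<Prod>j\<in>insert i I. D j ((x(i := y)) j)) = D i y * (\<Prod>j\<in>I. D j (x j))"
        proof -
        have "(\<Prod>j\<in>I. D j ((x(i := y)) j)) = (\<Prod>j\<in>I. D j (x j))"
          by (rule prod.cong) (use insert.hyps in auto)
        then show ?thesis using insert.hyps by (simp add: prod.insert)
      qed
      show "F (\<lambda>j\<in>insert i I. T j ((x(i := y)) j)) * (\<Prod>j\<in>insert i I. D j ((x(i := y)) j)) =
         F ((\<lambda>j\<in>I. T j (x j))(i := T i y)) * (\<Prod>j\<in>I. D j (x j)) * D i y"
        unfolding e1 e2 by (simp add: ac_simps)
    qed
    also have "\<dots> = H (T i y) * D i y"
      unfolding H_def using Rm insert.prems(2) by (subst nn_integral_multc) (auto intro!: borel_measurable_prod_ennreal)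
    finally show "H (T i y) * D i y = (\<integral>\<^sup>+x. F (\<lambda>j\<in>insert i I. T j ((x(i := y)) j)) *
        (\<Prod>j\<in>insert i I. D j ((x(i := y)) j)) \<partial>PiM I (\<lambda>_. lborel))" by simp
  qed
  also have "\<dots> = (\<integral>\<^sup>+x. F (\<lambda>j\<in>insert i I. T j (x j)) * (\<Prod>j\<in>insert i I. D j (x j)) \<partial>PiM (insert i I) (\<lambda>_. lborel))"
  proof (rule product_nn_integral_insert_rev[symmetric])
    show "finite I" "i \<notin> I" using insert.hyps by auto
    have "(\<lambda>x. (\<lambda>j\<in>insert i I. T j (x j))) \<in> measurable (PiM (insert i I) (\<lambda>_. lborel)) (PiM (insert i I) (\<lambda>_. lborel))"
      by (rule measurable_restrict) (use Tm' in auto)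
    then have "(\<lambda>x. F (\<lambda>j\<in>insert i I. T j (x j))) \<in> borel_measurable (PiM (insert i I) (\<lambda>_. lborel))"
      using insert.prems(4) by (simp add: measurable_comp[unfolded comp_def])
    then show "(\<lambda>x. F (\<lambda>j\<in>insert i I. T j (x j)) * (\<Prod>j\<in>insert i I. D j (x j))) \<in> borel_measurable (PiM (insert i I) (\<lambda>_. lborel))"
      by (intro borel_measurable_times_ennreal borel_measurable_prod_ennreal) (use Dm in measurable)
  qed
  finally show ?case .
qed



lemma upd_meas_gen:
  assumes f: "f \<in> measurable N (PiM I (\<lambda>_. lborel))" and g: "g \<in> borel_measurable N" and i: "i \<notin> I"
  shows "(\<lambda>\<omega>. (f \<omega>)(i := g \<omega>)) \<in> measurable N (PiM (insert i I) (\<lambda>_. lborel))"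
proof (rule measurable_PiM_single')
  fix j assume j: "j \<in> insert i I"
  show "(\<lambda>\<omega>. ((f \<omega>)(i := g \<omega>)) j) \<in> measurable N lborel"
  proof (cases "j = i")
    case True then show ?thesis using g by simp
  next
    case False
    then have "j \<in> I" using j by auto
    then have "(\<lambda>\<omega>. f \<omega> j) \<in> borel_measurable N"
      using measurable_comp[OF f measurable_component_singleton[of j I "\<lambda>_. lborel"]]
      by (simp add: comp_def)
    then show ?thesis using False by simp
  qed
next
  show "(\<lambda>\<omega>. (f \<omega>)(i := g \<omega>)) \<in> space N \<rightarrow> (\<Pi>\<^sub>E j\<in>insert i I. space lborel)"
    using measurable_space[OF f] by (auto simp: space_PiM PiE_def extensional_def)
qed

lemma pos_sets:
  fixes n k :: nat assumes "n \<le> k"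
  shows "{z \<in> space (PiM {..<k} (\<lambda>_. lborel)). \<forall>i\<in>{..<n}. 0 < (z i::real)} \<in> sets (PiM {..<k} (\<lambda>_. lborel))"
proof (rule sets.sets_Collect_finite_All)
  fix i assume "i \<in> {..<n}"
  then have "i \<in> {..<k}" using assms by auto
  then have "(\<lambda>z. z i) \<in> borel_measurable (PiM {..<k} (\<lambda>_. lborel::real measure))"
    by simp
  then have "(\<lambda>z. z i) -` {0<..} \<inter> space (PiM {..<k} (\<lambda>_. lborel)) \<in> sets (PiM {..<k} (\<lambda>_. lborel::real measure))"
    by (rule measurable_sets) simp
  then show "{z \<in> space (PiM {..<k} (\<lambda>_. lborel)). 0 < (z i::real)} \<in> sets (PiM {..<k} (\<lambda>_. lborel))"
    by (simp add: vimage_def Int_def conj_commute)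
qed simp

lemma pos_meas:
  fixes n k :: nat assumes "n \<le> k"
  shows "(\<lambda>z. indicator {z::nat\<Rightarrow>real. \<forall>i<n. 0 < z i} z :: ennreal) \<in> borel_measurable (PiM {..<k} (\<lambda>_. lborel))"
proof -
  have e: "{z \<in> space (PiM {..<k} (\<lambda>_. lborel)). z \<in> {z::nat\<Rightarrow>real. \<forall>i<n. 0 < z i}} =
    {z \<in> space (PiM {..<k} (\<lambda>_. lborel)). \<forall>i\<in>{..<n}. 0 < (z i::real)}" by auto
  have "{z \<in> space (PiM {..<k} (\<lambda>_. lborel)). z \<in> {z::nat\<Rightarrow>real. \<forall>i<n. 0 < z i}} \<in> sets (PiM {..<k} (\<lambda>_. lborel))"
    unfolding e by (rule pos_sets[OF assms])
  then show ?thesis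
    by (rule borel_measurable_indicator'[where A = "\<lambda>_. {z::nat\<Rightarrow>real. \<forall>i<n. 0 < z i}" and f = "\<lambda>z. z"])
qed

definition osim :: "nat \<Rightarrow> (nat \<Rightarrow> real) set" where
  "osim m = {y. (\<forall>i<m. 0 < y i) \<and> (\<Sum>i<m. y i) < 1}"

lemma polar:
  fixes m :: nat and H :: "(nat \<Rightarrow> real) \<Rightarrow> ennreal"
  assumes Hm[measurable]: "H \<in> borel_measurable (PiM {..<Suc m} (\<lambda>_. lborel))"
  shows "(\<integral>\<^sup>+z. H z * indicator {z. \<forall>i<Suc m. 0 < z i} z \<partial>PiM {..<Suc m} (\<lambda>_. lborel)) =
    (\<integral>\<^sup>+r. indicator {0<..} r * ennreal (r ^ m) *
       (\<integral>\<^sup>+y. H (\<lambda>i\<in>{..<Suc m}. r * simplex_pt (Suc m) y i) * indicator (osim m) y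
          \<partial>PiM {..<m} (\<lambda>_. lborel)) \<partial>lborel)"
proof -
  interpret product_sigma_finite "\<lambda>_. lborel" by standard
  interpret PI: sigma_finite_measure "PiM {..<m} (\<lambda>_. lborel)" by (rule sigma_finite) simp
  interpret PP: pair_sigma_finite "PiM {..<m} (\<lambda>_. lborel)" lborel by standard
  define s where "s x = (\<Sum>i<m. x i)" for x :: "nat \<Rightarrow> real"
  have sm[measurable]: "s \<in> borel_measurable (PiM {..<m} (\<lambda>_. lborel))" unfolding s_def by measurable
  define Phi where "Phi x r = H (x(m := r - s x)) * indicator {x. \<forall>i<m. 0 < x i} x * indicator {s x<..} r"
    for x :: "nat \<Rightarrow> real" and r :: real
  have Phim: "(\<lambda>(x, r). Phi x r) \<in> borel_measurable (PiM {..<m} (\<lambda>_. lborel) \<Otimes>\<^sub>M lborel)"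
  proof -
    have "(\<lambda>\<omega>. (fst \<omega>)(m := snd \<omega> - s (fst \<omega>))) \<in> measurable (PiM {..<m} (\<lambda>_. lborel) \<Otimes>\<^sub>M lborel) (PiM (insert m {..<m}) (\<lambda>_. lborel))"
      by (rule upd_meas_gen) auto
    then have gmeas: "(\<lambda>\<omega>. (fst \<omega>)(m := snd \<omega> - s (fst \<omega>))) \<in> measurable (PiM {..<m} (\<lambda>_. lborel) \<Otimes>\<^sub>M lborel) (PiM {..<Suc m} (\<lambda>_. lborel))"
      by (simp add: lessThan_Suc)
    have i2: "(\<lambda>\<omega>. indicator {s (fst \<omega>)<..} (snd \<omega>) :: ennreal) \<in> borel_measurable (PiM {..<m} (\<lambda>_. lborel) \<Otimes>\<^sub>M lborel)"
    proof -
      have "(\<lambda>\<omega>. indicator {s (fst \<omega>)<..} (snd \<omega>) :: ennreal) = (\<lambda>\<omega>. if s (fst \<omega>) < snd \<omega> then 1 else 0)"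
        by (auto simp: indicator_def fun_eq_iff)
      also have "\<dots> \<in> borel_measurable (PiM {..<m} (\<lambda>_. lborel) \<Otimes>\<^sub>M lborel)"
      proof (rule measurable_If[OF measurable_const measurable_const])
        have sn: "snd \<in> borel_measurable (PiM {..<m} (\<lambda>_. lborel) \<Otimes>\<^sub>M lborel)"
          using measurable_snd[of "PiM {..<m} (\<lambda>_. lborel)" lborel] by simp
        have fs: "(\<lambda>\<omega>. s (fst \<omega>)) \<in> borel_measurable (PiM {..<m} (\<lambda>_. lborel) \<Otimes>\<^sub>M lborel)"
          by (rule measurable_compose[OF measurable_fst sm])
        show "{\<omega> \<in> space (PiM {..<m} (\<lambda>_. lborel) \<Otimes>\<^sub>M lborel). s (fst \<omega>) < snd \<omega>} \<in> sets (PiM {..<m} (\<lambda>_. lborel) \<Otimes>\<^sub>M lborel)"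
          using borel_measurable_pred_less[OF fs sn] by (simp add: Measurable.pred_def)
      qed simp_all
      finally show ?thesis .
    qed
    have i1: "(\<lambda>\<omega>. indicator {x::nat\<Rightarrow>real. \<forall>i<m. 0 < x i} (fst \<omega>) :: ennreal) \<in> borel_measurable (PiM {..<m} (\<lambda>_. lborel) \<Otimes>\<^sub>M (lborel::real measure))"
      by (rule measurable_compose[OF measurable_fst pos_meas[OF order_refl]])
    have h1: "(\<lambda>\<omega>. H ((fst \<omega>)(m := snd \<omega> - s (fst \<omega>)))) \<in> borel_measurable (PiM {..<m} (\<lambda>_. lborel) \<Otimes>\<^sub>M lborel)"
      using measurable_comp[OF gmeas Hm] by (simp add: comp_def)
    show ?thesis unfolding Phi_def case_prod_beta
      by (intro borel_measurable_times_ennreal h1 i1 i2)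
  qed
  have "(\<integral>\<^sup>+z. H z * indicator {z. \<forall>i<Suc m. 0 < z i} z \<partial>PiM {..<Suc m} (\<lambda>_. lborel)) =
     (\<integral>\<^sup>+x. (\<integral>\<^sup>+t. H ((x::nat\<Rightarrow>real)(m := (t::real))) * indicator {z. \<forall>i<Suc m. 0 < z i} (x(m := t)) \<partial>lborel) \<partial>PiM {..<m} (\<lambda>_. lborel))"
  proof -
    have "(\<lambda>z. H z * indicator {z::nat\<Rightarrow>real. \<forall>i<Suc m. 0 < z i} z) \<in> borel_measurable (PiM (insert m {..<m}) (\<lambda>_. lborel))"
      using borel_measurable_times_ennreal[OF Hm pos_meas[OF order_refl]] by (simp add: lessThan_Suc)
    then show ?thesis
      unfolding lessThan_Suc by (rule product_nn_integral_insert[rotated 2]) auto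
  qed
  also have "\<dots> = (\<integral>\<^sup>+x. (\<integral>\<^sup>+r. Phi x r \<partial>lborel) \<partial>PiM {..<m} (\<lambda>_. lborel))"
  proof (rule nn_integral_cong)
    fix x :: "nat \<Rightarrow> real" assume x: "x \<in> space (PiM {..<m} (\<lambda>_. lborel))"
    have um: "(\<lambda>t. x(m := t)) \<in> measurable lborel (PiM {..<Suc m} (\<lambda>_. lborel))"
      using measurable_component_update[OF x, of m] by (simp add: lessThan_Suc)
    have gm: "(\<lambda>t. H ((x::nat\<Rightarrow>real)(m := (t::real))) * indicator {z. \<forall>i<Suc m. 0 < z i} (x(m := t))) \<in> borel_measurable borel"
      using um by measurable
    have "(\<integral>\<^sup>+t. H ((x::nat\<Rightarrow>real)(m := (t::real))) * indicator {z. \<forall>i<Suc m. 0 < z i} (x(m := t)) \<partial>lborel) =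
        ennreal \<bar>1::real\<bar> * (\<integral>\<^sup>+r. H (x(m := - s x + 1 * r)) * indicator {z. \<forall>i<Suc m. 0 < z i} (x(m := - s x + 1 * r)) \<partial>lborel)"
      by (rule nn_integral_real_affine[OF gm]) simp
    also have "\<dots> = (\<integral>\<^sup>+r. Phi x r \<partial>lborel)"
    proof -
      have ii: "indicator {z. \<forall>i<Suc m. 0 < z i} (x(m := - s x + 1 * r)) =
         (indicator {x. \<forall>i<m. 0 < x i} x * indicator {s x<..} r :: ennreal)" for r
        by (auto simp: indicator_def less_Suc_eq)
      show ?thesis unfolding Phi_def ii by (simp add: mult.assoc)
    qed
    finally show "(\<integral>\<^sup>+t. H ((x::nat\<Rightarrow>real)(m := (t::real))) * indicator {z. \<forall>i<Suc m. 0 < z i} (x(m := t)) \<partial>lborel) =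
        (\<integral>\<^sup>+r. Phi x r \<partial>lborel)" .
  qed
  also have "\<dots> = (\<integral>\<^sup>+r. (\<integral>\<^sup>+x. Phi x r \<partial>PiM {..<m} (\<lambda>_. lborel)) \<partial>lborel)"
    by (rule PP.Fubini'[symmetric]) (rule Phim)
  also have "\<dots> = (\<integral>\<^sup>+r. indicator {0<..} r * ennreal (r ^ m) *
       (\<integral>\<^sup>+y. H (\<lambda>i\<in>{..<Suc m}. r * simplex_pt (Suc m) y i) * indicator (osim m) y
          \<partial>PiM {..<m} (\<lambda>_. lborel)) \<partial>lborel)"
  proof (rule nn_integral_cong)
    fix r :: real
    show "(\<integral>\<^sup>+x. Phi x r \<partial>PiM {..<m} (\<lambda>_. lborel)) = indicator {0<..} r * ennreal (r ^ m) *
       (\<integral>\<^sup>+y. H (\<lambda>i\<in>{..<Suc m}. r * simplex_pt (Suc m) y i) * indicator (osim m) y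
          \<partial>PiM {..<m} (\<lambda>_. lborel))"
    proof (cases "r > 0")
      case False
      have "Phi x r = 0" for x
      proof -
        have "\<not> ((\<forall>i<m. 0 < x i) \<and> s x < r)"
        proof
          assume "(\<forall>i<m. 0 < x i) \<and> s x < r"
          then have "0 \<le> s x" "s x < r" unfolding s_def by (auto intro: sum_nonneg less_imp_le)
          then show False using False by simp
        qed
        then show ?thesis by (auto simp: Phi_def indicator_def)
      qed
      then show ?thesis using False by simp
    next
      case True
      have Phim1: "(\<lambda>x. Phi x r) \<in> borel_measurable (PiM {..<m} (\<lambda>_. lborel))"
        using measurable_comp[OF measurable_Pair2'[of r lborel "PiM {..<m} (\<lambda>_. lborel)"] Phim] by (simp add: comp_def)
      have "(\<integral>\<^sup>+x. Phi x r \<partial>PiM {..<m} (\<lambda>_. lborel)) =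
         (\<integral>\<^sup>+x. Phi (\<lambda>i\<in>{..<m}. r * x i) r * (\<Prod>i\<in>{..<m}. ennreal r) \<partial>PiM {..<m} (\<lambda>_. lborel))"
      proof (rule diag_subst[where T = "\<lambda>_ u. r * u" and D = "\<lambda>_ _. ennreal r"])
        fix i and f :: "real \<Rightarrow> ennreal" assume fm: "f \<in> borel_measurable borel"
        have "(\<integral>\<^sup>+x. f x \<partial>lborel) = \<bar>r\<bar> * (\<integral>\<^sup>+x. f (0 + r * x) \<partial>lborel)"
          by (rule nn_integral_real_affine[OF fm]) (use True in simp)
        also have "\<dots> = (\<integral>\<^sup>+x. f (r * x) * ennreal r \<partial>lborel)"
          using True fm by (subst nn_integral_multc) (auto simp: mult.commute)
        finally show "(\<integral>\<^sup>+x. f x \<partial>lborel) = (\<integral>\<^sup>+x. f (r * x) * ennreal r \<partial>lborel)" .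
      qed (use Phim1 in auto)
      also have "\<dots> = (\<integral>\<^sup>+y. ennreal (r ^ m) * (H (\<lambda>i\<in>{..<Suc m}. r * simplex_pt (Suc m) y i) * indicator (osim m) y)
          \<partial>PiM {..<m} (\<lambda>_. lborel))"
      proof (rule nn_integral_cong)
        fix y
        have s1: "s (\<lambda>i\<in>{..<m}. r * y i) = r * (\<Sum>i<m. y i)"
          unfolding s_def by (simp add: sum_distrib_left)
        have f1: "(\<lambda>i\<in>{..<m}. r * y i)(m := r - s (\<lambda>i\<in>{..<m}. r * y i)) =
            (\<lambda>i\<in>{..<Suc m}. r * simplex_pt (Suc m) y i)"
          unfolding s1 by (auto simp: fun_eq_iff simplex_pt_def right_diff_distrib)
        have i1: "indicator {x. \<forall>i<m. 0 < x i} (\<lambda>i\<in>{..<m}. r * y i) * indicator {s (\<lambda>i\<in>{..<m}. r * y i)<..} r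
            = (indicator (osim m) y :: ennreal)"
          unfolding s1 using True by (auto simp: indicator_def osim_def zero_less_mult_iff)
        have p1: "(\<Prod>i\<in>{..<m}. ennreal r) = ennreal (r ^ m)"
          using True by (simp add: ennreal_power)
        show "Phi (\<lambda>i\<in>{..<m}. r * y i) r * (\<Prod>i\<in>{..<m}. ennreal r) =
          ennreal (r ^ m) * (H (\<lambda>i\<in>{..<Suc m}. r * simplex_pt (Suc m) y i) * indicator (osim m) y)"
          unfolding Phi_def f1 mult.assoc i1 p1 by (simp only: ac_simps)
      qed
      also have "\<dots> = ennreal (r ^ m) * (\<integral>\<^sup>+y. H (\<lambda>i\<in>{..<Suc m}. r * simplex_pt (Suc m) y i) * indicator (osim m) y
          \<partial>PiM {..<m} (\<lambda>_. lborel))"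
      proof (rule nn_integral_cmult)
        have mr: "(\<lambda>y. (\<lambda>i\<in>{..<Suc m}. r * simplex_pt (Suc m) y i)) \<in> measurable (PiM {..<m} (\<lambda>_. lborel)) (PiM {..<Suc m} (\<lambda>_. lborel))"
        proof (rule measurable_restrict)
          fix i assume "i \<in> {..<Suc m}"
          then show "(\<lambda>y. r * simplex_pt (Suc m) y i) \<in> measurable (PiM {..<m} (\<lambda>_. lborel)) lborel"
            unfolding simplex_pt_def by (cases "i < m") auto
        qed
        have mi: "(\<lambda>y. indicator (osim m) y :: ennreal) \<in> borel_measurable (PiM {..<m} (\<lambda>_. lborel))"
        proof -
          have "{y \<in> space (PiM {..<m} (\<lambda>_. lborel)). y \<in> osim m} \<in> sets (PiM {..<m} (\<lambda>_. lborel))"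
            unfolding osim_def by measurable
          then show ?thesis by (rule borel_measurable_indicator')
        qed
        show "(\<lambda>y. H (\<lambda>i\<in>{..<Suc m}. r * simplex_pt (Suc m) y i) * indicator (osim m) y) \<in> borel_measurable (PiM {..<m} (\<lambda>_. lborel))"
          by (rule borel_measurable_times_ennreal[OF measurable_comp[OF mr Hm, unfolded comp_def] mi])
      qed
      finally show ?thesis using True by simp
    qed
  qed
  finally show ?thesis .
qed



lemma exp_int: "(\<integral>\<^sup>+x. ennreal (exp (- x)) * indicator {0<..} x \<partial>lborel) = 1"
proof -
  have "(\<integral>\<^sup>+x. ennreal (exp (- x)) * indicator {0<..} x \<partial>lborel) =
        (\<integral>\<^sup>+x. ennreal (exp (- x)) * indicator {0..} x \<partial>lborel)"
  proof (rule nn_integral_cong_AE)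
    show "AE x in lborel. ennreal (exp (- x)) * indicator {0<..} x = ennreal (exp (- x)) * indicator {0..} x"
      using AE_lborel_singleton[of "0::real"] by eventually_elim (auto simp: indicator_def)
  qed
  also have "\<dots> = ennreal (0 - (- exp (- 0)))"
  proof (rule nn_integral_FTC_atLeast)
    show "((\<lambda>x. - exp (- x)) has_real_derivative exp (- x)) (at x)" for x :: real
      by (auto intro!: derivative_eq_intros)
    show "((\<lambda>x::real. - exp (- x)) \<longlongrightarrow> 0) at_top" by real_asymp
  qed auto
  finally show ?thesis by simp
qed

lemma radial_int:
  fixes c p :: real assumes c: "c > 0" and p: "p > 0"
  shows "(\<integral>\<^sup>+r. ennreal (r powr (p - 1) * c * exp (- (c * r powr p))) * indicator {0<..} r \<partial>lborel) = ennreal (1 / p)"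
proof -
  have "1 = (\<integral>\<^sup>+x. ennreal (exp (- x)) * indicator {0<..} x \<partial>lborel)" using exp_int by simp
  also have "\<dots> = (\<integral>\<^sup>+x. ennreal (exp (- (c * x powr p)) * (c * p * x powr (p - 1))) * indicator {0<..} x \<partial>lborel)"
    by (rule subst_pow[OF c p]) simp
  also have "\<dots> = (\<integral>\<^sup>+x. ennreal p * (ennreal (x powr (p - 1) * c * exp (- (c * x powr p))) * indicator {0<..} x) \<partial>lborel)"
  proof (rule nn_integral_cong)
    fix x :: real
    have "exp (- (c * x powr p)) * (c * p * x powr (p - 1)) = p * (x powr (p - 1) * c * exp (- (c * x powr p)))"
      by (simp add: ac_simps)
    note eq = this
    have pw: "ennreal (exp (- (c * x powr p)) * (c * p * x powr (p - 1))) = ennreal p * ennreal (x powr (p - 1) * c * exp (- (c * x powr p)))"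
      unfolding eq using p by (intro ennreal_mult') simp
    show "ennreal (exp (- (c * x powr p)) * (c * p * x powr (p - 1))) * indicator {0<..} x =
      ennreal p * (ennreal (x powr (p - 1) * c * exp (- (c * x powr p))) * indicator {0<..} x)"
      unfolding pw by (simp only: mult.assoc)
  qed
  also have "\<dots> = ennreal p * (\<integral>\<^sup>+x. ennreal (x powr (p - 1) * c * exp (- (c * x powr p))) * indicator {0<..} x \<partial>lborel)"
    by (rule nn_integral_cmult) measurable
  finally have e: "ennreal p * (\<integral>\<^sup>+x. ennreal (x powr (p - 1) * c * exp (- (c * x powr p))) * indicator {0<..} x \<partial>lborel) = 1" by simp
  have "ennreal (1 / p) * (ennreal p * (\<integral>\<^sup>+x. ennreal (x powr (p - 1) * c * exp (- (c * x powr p))) * indicator {0<..} x \<partial>lborel)) = ennreal (1 / p)"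
    unfolding e by simp
  moreover have "ennreal (1 / p) * ennreal p = 1" using p by (simp add: ennreal_mult[symmetric])
  ultimately show ?thesis by (simp add: mult.assoc[symmetric])
qed

lemma sp_meas:
  "(\<lambda>y. \<lambda>i\<in>{..<Suc m}. c * simplex_pt (Suc m) y i) \<in> measurable (PiM {..<m} (\<lambda>_. lborel)) (PiM {..<Suc m} (\<lambda>_. (lborel::real measure)))"
proof (rule measurable_restrict)
  fix i assume "i \<in> {..<Suc m}"
  then show "(\<lambda>y. c * simplex_pt (Suc m) y i) \<in> measurable (PiM {..<m} (\<lambda>_. lborel)) lborel"
    unfolding simplex_pt_def by (cases "i < m") auto
qed

lemma osim_meas: "(\<lambda>y. indicator (osim m) y :: ennreal) \<in> borel_measurable (PiM {..<m} (\<lambda>_. lborel))"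
proof -
  have "{y \<in> space (PiM {..<m} (\<lambda>_. lborel)). y \<in> osim m} \<in> sets (PiM {..<m} (\<lambda>_. lborel))"
    unfolding osim_def by measurable
  then show ?thesis by (rule borel_measurable_indicator')
qed



lemma osim_pos:
  assumes "y \<in> osim m"
  shows "\<forall>i<Suc m. 0 < simplex_pt (Suc m) y i"
  using assms by (auto simp: osim_def simplex_pt_def less_Suc_eq)

lemma hom:
  fixes m :: nat and h rho :: "(nat \<Rightarrow> real) \<Rightarrow> real" and p :: real
  assumes hm[measurable]: "h \<in> borel_measurable (PiM {..<Suc m} (\<lambda>_. lborel))"
    and rm[measurable]: "rho \<in> borel_measurable (PiM {..<Suc m} (\<lambda>_. lborel))"
    and hloc: "\<And>x y. (\<forall>i<Suc m. x i = y i) \<Longrightarrow> h x = h y"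
    and rloc: "\<And>x y. (\<forall>i<Suc m. x i = y i) \<Longrightarrow> rho x = rho y"
    and h0: "\<And>z. \<not> (\<forall>i<Suc m. 0 < z i) \<Longrightarrow> h z = 0"
    and hnn: "\<And>z. 0 \<le> h z"
    and hhom: "\<And>z t. 0 < t \<Longrightarrow> (\<forall>i<Suc m. 0 < z i) \<Longrightarrow> h (\<lambda>i. t * z i) = t powr (- real (Suc m)) * h z"
    and rhom: "\<And>z t. 0 < t \<Longrightarrow> (\<forall>i<Suc m. 0 < z i) \<Longrightarrow> rho (\<lambda>i. t * z i) = t powr p * rho z"
    and rpos: "\<And>z. (\<forall>i<Suc m. 0 < z i) \<Longrightarrow> 0 < rho z"
    and p: "0 < p"
  shows "(\<integral>\<^sup>+z. ennreal (h z * rho z * exp (- rho z)) \<partial>PiM {..<Suc m} (\<lambda>_. lborel)) =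
    ennreal (1 / p) * (\<integral>\<^sup>+y. indicator (simplex_dom (Suc m)) y * ennreal (h (simplex_pt (Suc m) y)) \<partial>PiM {..<m} (\<lambda>_. lborel))"
proof -
  interpret product_sigma_finite "\<lambda>_. lborel" by standard
  interpret PI: sigma_finite_measure "PiM {..<m} (\<lambda>_. lborel)" by (rule sigma_finite) simp
  interpret PP: pair_sigma_finite "PiM {..<m} (\<lambda>_. lborel)" lborel by standard
  define H where "H z = ennreal (h z * rho z * exp (- rho z))" for z
  have Hm: "H \<in> borel_measurable (PiM {..<Suc m} (\<lambda>_. lborel))" unfolding H_def by measurable
  define hs where "hs y = h (simplex_pt (Suc m) y)" for y
  define cs where "cs y = rho (simplex_pt (Suc m) y)" for y
  have hsm[measurable]: "hs \<in> borel_measurable (PiM {..<m} (\<lambda>_. lborel))"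
  proof -
    have "hs = (\<lambda>y. h (\<lambda>i\<in>{..<Suc m}. 1 * simplex_pt (Suc m) y i))"
      unfolding hs_def by (intro ext hloc) auto
    also have "\<dots> \<in> borel_measurable (PiM {..<m} (\<lambda>_. lborel))"
      by (rule measurable_comp[OF sp_meas[where m=m and c=1] hm, unfolded comp_def])
    finally show ?thesis .
  qed
  have csm[measurable]: "cs \<in> borel_measurable (PiM {..<m} (\<lambda>_. lborel))"
  proof -
    have "cs = (\<lambda>y. rho (\<lambda>i\<in>{..<Suc m}. 1 * simplex_pt (Suc m) y i))"
      unfolding cs_def by (intro ext rloc) auto
    also have "\<dots> \<in> borel_measurable (PiM {..<m} (\<lambda>_. lborel))"
      by (rule measurable_comp[OF sp_meas[where m=m and c=1] rm, unfolded comp_def])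
    finally show ?thesis .
  qed
  note osim_meas[measurable]
  define Psi where "Psi y r = indicator (osim m) y * indicator {0<..} r * ennreal (hs y) *
      ennreal (r powr (p - 1) * cs y * exp (- (cs y * r powr p)))" for y and r :: real
  have Psim: "(\<lambda>(y, r). Psi y r) \<in> borel_measurable (PiM {..<m} (\<lambda>_. lborel) \<Otimes>\<^sub>M (lborel :: real measure))"
    unfolding Psi_def case_prod_beta by measurable
  have "(\<integral>\<^sup>+z. ennreal (h z * rho z * exp (- rho z)) \<partial>PiM {..<Suc m} (\<lambda>_. lborel)) =
      (\<integral>\<^sup>+z. H z * indicator {z. \<forall>i<Suc m. 0 < z i} z \<partial>PiM {..<Suc m} (\<lambda>_. lborel))"
    by (intro nn_integral_cong) (auto simp: H_def indicator_def h0)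
  also have "\<dots> = (\<integral>\<^sup>+r. indicator {0<..} r * ennreal (r ^ m) *
       (\<integral>\<^sup>+y. H (\<lambda>i\<in>{..<Suc m}. r * simplex_pt (Suc m) y i) * indicator (osim m) y
          \<partial>PiM {..<m} (\<lambda>_. lborel)) \<partial>lborel)"
    by (rule polar[OF Hm])
  also have "\<dots> = (\<integral>\<^sup>+r. (\<integral>\<^sup>+y. Psi y r \<partial>PiM {..<m} (\<lambda>_. lborel)) \<partial>lborel)"
  proof (rule nn_integral_cong)
    fix r :: real
    have "indicator {0<..} r * ennreal (r ^ m) *
       (\<integral>\<^sup>+y. H (\<lambda>i\<in>{..<Suc m}. r * simplex_pt (Suc m) y i) * indicator (osim m) y \<partial>PiM {..<m} (\<lambda>_. lborel)) =
       (\<integral>\<^sup>+y. indicator {0<..} r * ennreal (r ^ m) * (H (\<lambda>i\<in>{..<Suc m}. r * simplex_pt (Suc m) y i) * indicator (osim m) y) \<partial>PiM {..<m} (\<lambda>_. lborel))"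
    proof (rule nn_integral_cmult[symmetric])
      show "(\<lambda>y. H (\<lambda>i\<in>{..<Suc m}. r * simplex_pt (Suc m) y i) * indicator (osim m) y) \<in> borel_measurable (PiM {..<m} (\<lambda>_. lborel))"
        by (rule borel_measurable_times_ennreal[OF measurable_comp[OF sp_meas Hm, unfolded comp_def] osim_meas])
    qed
    also have "\<dots> = (\<integral>\<^sup>+y. Psi y r \<partial>PiM {..<m} (\<lambda>_. lborel))"
    proof (rule nn_integral_cong)
      fix y
      show "indicator {0<..} r * ennreal (r ^ m) * (H (\<lambda>i\<in>{..<Suc m}. r * simplex_pt (Suc m) y i) * indicator (osim m) y) = Psi y r"
      proof (cases "r > 0 \<and> y \<in> osim m")
        case False
        then show ?thesis by (auto simp: Psi_def indicator_def)
      next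
        case True
        then have r: "r > 0" and y: "y \<in> osim m" by auto
        have pos: "\<forall>i<Suc m. 0 < simplex_pt (Suc m) y i" using osim_pos[OF y] .
        have e1: "H (\<lambda>i\<in>{..<Suc m}. r * simplex_pt (Suc m) y i) = H (\<lambda>i. r * simplex_pt (Suc m) y i)"
        proof -
          have "h (\<lambda>i\<in>{..<Suc m}. r * simplex_pt (Suc m) y i) = h (\<lambda>i. r * simplex_pt (Suc m) y i)"
            by (rule hloc) auto
          moreover have "rho (\<lambda>i\<in>{..<Suc m}. r * simplex_pt (Suc m) y i) = rho (\<lambda>i. r * simplex_pt (Suc m) y i)"
            by (rule rloc) auto
          ultimately show ?thesis by (simp add: H_def)
        qed
        have e2: "H (\<lambda>i. r * simplex_pt (Suc m) y i) =
           ennreal (r powr (- real (Suc m)) * hs y * (r powr p * cs y) * exp (- (r powr p * cs y)))"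
          unfolding H_def hs_def cs_def using hhom[OF r pos] rhom[OF r pos] by simp
        have pw: "r ^ m * r powr (- real (Suc m)) * r powr p = r powr (p - 1)"
        proof -
          have "r ^ m = r powr real m" using r by (simp add: powr_realpow)
          then have "r ^ m * r powr (- real (Suc m)) * r powr p = r powr real m * r powr (- real (Suc m)) * r powr p"
            by simp
          also have "\<dots> = r powr (real m + (- real (Suc m)) + p)"
            by (simp only: powr_add)
          also have "real m + (- real (Suc m)) + p = p - 1" by simp
          finally show ?thesis .
        qed
        have hsnn: "0 \<le> hs y" by (simp add: hs_def hnn)
        have csnn: "0 \<le> cs y" using rpos[OF pos] by (simp add: cs_def)
        have "ennreal (r ^ m) * ennreal (r powr (- real (Suc m)) * hs y * (r powr p * cs y) * exp (- (r powr p * cs y))) =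
          ennreal (r ^ m * (r powr (- real (Suc m)) * hs y * (r powr p * cs y) * exp (- (r powr p * cs y))))"
          using r by (intro ennreal_mult'[symmetric]) simp
        also have "r ^ m * (r powr (- real (Suc m)) * hs y * (r powr p * cs y) * exp (- (r powr p * cs y))) =
            hs y * (r powr (p - 1) * cs y * exp (- (cs y * r powr p)))"
          by (simp add: pw[symmetric] ac_simps)
        also have "ennreal \<dots> = ennreal (hs y) * ennreal (r powr (p - 1) * cs y * exp (- (cs y * r powr p)))"
          using hsnn csnn by (intro ennreal_mult) auto
        finally show ?thesis unfolding e1 e2 Psi_def using r y by simp
      qed
    qed
    finally show "indicator {0<..} r * ennreal (r ^ m) *
       (\<integral>\<^sup>+y. H (\<lambda>i\<in>{..<Suc m}. r * simplex_pt (Suc m) y i) * indicator (osim m) y \<partial>PiM {..<m} (\<lambda>_. lborel)) =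
       (\<integral>\<^sup>+y. Psi y r \<partial>PiM {..<m} (\<lambda>_. lborel))" .
  qed
  also have "\<dots> = (\<integral>\<^sup>+y. (\<integral>\<^sup>+r. Psi y r \<partial>lborel) \<partial>PiM {..<m} (\<lambda>_. lborel))"
    by (rule PP.Fubini'[OF Psim])
  also have "\<dots> = (\<integral>\<^sup>+y. ennreal (1 / p) * (indicator (osim m) y * ennreal (hs y)) \<partial>PiM {..<m} (\<lambda>_. lborel))"
  proof (rule nn_integral_cong)
    fix y
    have "(\<integral>\<^sup>+r. Psi y r \<partial>lborel) = (\<integral>\<^sup>+r. (indicator (osim m) y * ennreal (hs y)) *
        (ennreal (r powr (p - 1) * cs y * exp (- (cs y * r powr p))) * indicator {0<..} r) \<partial>lborel)"
      by (intro nn_integral_cong) (simp add: Psi_def ac_simps)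
    also have "\<dots> = (indicator (osim m) y * ennreal (hs y)) *
        (\<integral>\<^sup>+r. ennreal (r powr (p - 1) * cs y * exp (- (cs y * r powr p))) * indicator {0<..} r \<partial>lborel)"
      by (rule nn_integral_cmult) measurable
    also have "\<dots> = ennreal (1 / p) * (indicator (osim m) y * ennreal (hs y))"
    proof (cases "y \<in> osim m")
      case True
      have "0 < cs y" using rpos[OF osim_pos[OF True]] by (simp add: cs_def)
      then show ?thesis using radial_int[OF _ p] by (simp add: mult.commute)
    next
      case False
      then show ?thesis by simp
    qed
    finally show "(\<integral>\<^sup>+r. Psi y r \<partial>lborel) = ennreal (1 / p) * (indicator (osim m) y * ennreal (hs y))" .
  qed
  also have "\<dots> = ennreal (1 / p) * (\<integral>\<^sup>+y. indicator (osim m) y * ennreal (hs y) \<partial>PiM {..<m} (\<lambda>_. lborel))"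
    by (rule nn_integral_cmult) measurable
  also have "(\<integral>\<^sup>+y. indicator (osim m) y * ennreal (hs y) \<partial>PiM {..<m} (\<lambda>_. lborel)) =
      (\<integral>\<^sup>+y. indicator (simplex_dom (Suc m)) y * ennreal (h (simplex_pt (Suc m) y)) \<partial>PiM {..<m} (\<lambda>_. lborel))"
  proof (rule nn_integral_cong)
    fix y :: "nat \<Rightarrow> real"
    show "indicator (osim m) y * ennreal (hs y) = indicator (simplex_dom (Suc m)) y * ennreal (h (simplex_pt (Suc m) y))"
    proof (cases "y \<in> osim m")
      case True
      then have "y \<in> simplex_dom (Suc m)" by (auto simp: osim_def simplex_dom_def less_imp_le)
      then show ?thesis using True by (simp add: hs_def)
    next
      case False
      show ?thesis
      proof (cases "y \<in> simplex_dom (Suc m)")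
        case True
        have "\<not> (\<forall>i<Suc m. 0 < simplex_pt (Suc m) y i)"
        proof
          assume a: "\<forall>i<Suc m. 0 < simplex_pt (Suc m) y i"
          have "\<forall>i<m. 0 < y i"
          proof (intro allI impI)
            fix i assume "i < m"
            then show "0 < y i" using a[rule_format, of i] by (simp add: simplex_pt_def)
          qed
          moreover have "(\<Sum>i<m. y i) < 1" using a[rule_format, of m] by (simp add: simplex_pt_def)
          ultimately show False using False by (simp add: osim_def)
        qed
        then show ?thesis using False by (simp add: hs_def h0)
      next
        case False2: False
        then show ?thesis using False by simp
      qed
    qed
  qed
  finally show ?thesis .
qed



lemma SUP_min_nat_ennreal: "(SUP n. min (a::ennreal) (of_nat n)) = a"
proof -
  have inc: "incseq (\<lambda>n. min a (of_nat n))"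
    by (intro incseq_SucI) (auto simp: min_le_iff_disj)
  have "(\<lambda>n. min a (of_nat n)) \<longlonglongrightarrow> min a top"
    by (intro tendsto_min tendsto_const of_nat_tendsto_top_ennreal)
  then have "(\<lambda>n. min a (of_nat n)) \<longlonglongrightarrow> a" by simp
  moreover have "(\<lambda>n. min a (of_nat n)) \<longlonglongrightarrow> (SUP n. min a (of_nat n))" using inc by (rule LIMSEQ_SUP)
  ultimately show ?thesis using LIMSEQ_unique by blast
qed

lemma subst_pow_enn:
  fixes f :: "real \<Rightarrow> ennreal" and b t :: real
  assumes b: "b > 0" and t: "t > 0" and fm[measurable]: "f \<in> borel_measurable borel"
  shows "(\<integral>\<^sup>+x. f x * indicator {0<..} x \<partial>lborel) =
         (\<integral>\<^sup>+x. f (b * x powr t) * ennreal (b * t * x powr (t - 1)) * indicator {0<..} x \<partial>lborel)"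
proof -
  define fn where "fn n x = enn2real (min (f x) (of_nat n))" for n :: nat and x
  have efn: "ennreal (fn n x) = min (f x) (of_nat n)" for n x
  proof -
    have "min (f x) (of_nat n) \<le> of_nat n" by simp
    then have "min (f x) (of_nat n) < top" using of_nat_less_top[of n] by (rule le_less_trans)
    then show ?thesis unfolding fn_def by simp
  qed
  have fnm[measurable]: "fn n \<in> borel_measurable borel" for n unfolding fn_def by measurable
  have fnnn: "0 \<le> fn n x" for n x unfolding fn_def by simp
  have g'nn: "0 \<le> b * t * x powr (t - 1)" for x using b t by simp
  have "(\<integral>\<^sup>+x. f x * indicator {0<..} x \<partial>lborel) = (\<integral>\<^sup>+x. (SUP n. ennreal (fn n x) * indicator {0<..} x) \<partial>lborel)"
    by (intro nn_integral_cong) (simp add: efn SUP_mult_right_ennreal[symmetric] SUP_min_nat_ennreal)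
  also have "\<dots> = (SUP n. \<integral>\<^sup>+x. ennreal (fn n x) * indicator {0<..} x \<partial>lborel)"
  proof (rule nn_integral_monotone_convergence_SUP)
    show "incseq (\<lambda>n x. ennreal (fn n x) * indicator {0<..} x)"
      by (intro incseq_SucI le_funI) (auto simp: efn intro!: mult_right_mono min.mono)
  qed measurable
  also have "\<dots> = (SUP n. \<integral>\<^sup>+x. ennreal (fn n (b * x powr t) * (b * t * x powr (t - 1))) * indicator {0<..} x \<partial>lborel)"
    by (intro SUP_cong refl subst_pow b t fnm)
  also have "\<dots> = (\<integral>\<^sup>+x. (SUP n. ennreal (fn n (b * x powr t) * (b * t * x powr (t - 1))) * indicator {0<..} x) \<partial>lborel)"
  proof (rule nn_integral_monotone_convergence_SUP[symmetric])
    show "incseq (\<lambda>n x. ennreal (fn n (b * x powr t) * (b * t * x powr (t - 1))) * indicator {0<..} x)"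
    proof (intro incseq_SucI le_funI)
      fix n x
      have "ennreal (fn n (b * x powr t) * (b * t * x powr (t - 1))) \<le> ennreal (fn (Suc n) (b * x powr t) * (b * t * x powr (t - 1)))"
        using g'nn[of x] fnnn by (simp add: ennreal_mult' efn) (intro mult_right_mono min.mono, auto)
      then show "ennreal (fn n (b * x powr t) * (b * t * x powr (t - 1))) * indicator {0<..} x \<le>
          ennreal (fn (Suc n) (b * x powr t) * (b * t * x powr (t - 1))) * indicator {0<..} x"
        by (rule mult_right_mono) simp
    qed
  qed measurable
  also have "\<dots> = (\<integral>\<^sup>+x. f (b * x powr t) * ennreal (b * t * x powr (t - 1)) * indicator {0<..} x \<partial>lborel)"
  proof (rule nn_integral_cong)
    fix x :: real
    have "(SUP n. ennreal (fn n (b * x powr t) * (b * t * x powr (t - 1))) * indicator {0<..} x) =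
        (SUP n. min (f (b * x powr t)) (of_nat n)) * (ennreal (b * t * x powr (t - 1)) * indicator {0<..} x)"
      using fnnn by (simp add: ennreal_mult' efn SUP_mult_right_ennreal mult.assoc)
    then show "(SUP n. ennreal (fn n (b * x powr t) * (b * t * x powr (t - 1))) * indicator {0<..} x) =
        f (b * x powr t) * ennreal (b * t * x powr (t - 1)) * indicator {0<..} x"
      by (simp add: SUP_min_nat_ennreal mult.assoc)
  qed
  finally show ?thesis .
qed

lemma subst_piece:
  fixes f :: "real \<Rightarrow> ennreal" and b t :: real
  assumes b: "b > 0" and t: "t > 0" and fm[measurable]: "f \<in> borel_measurable borel"
  shows "(\<integral>\<^sup>+x. f x \<partial>lborel) =
    (\<integral>\<^sup>+x. f (if 0 < x then b * x powr t else x) * (if 0 < x then ennreal (b * t * x powr (t - 1)) else 1) \<partial>lborel)"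
proof -
  have "(\<integral>\<^sup>+x. f x \<partial>lborel) = (\<integral>\<^sup>+x. f x * indicator {0<..} x + f x * indicator {..0} x \<partial>lborel)"
    by (intro nn_integral_cong) (auto simp: indicator_def)
  also have "\<dots> = (\<integral>\<^sup>+x. f x * indicator {0<..} x \<partial>lborel) + (\<integral>\<^sup>+x. f x * indicator {..0} x \<partial>lborel)"
    by (rule nn_integral_add) measurable
  also have "(\<integral>\<^sup>+x. f x * indicator {0<..} x \<partial>lborel) =
      (\<integral>\<^sup>+x. f (b * x powr t) * ennreal (b * t * x powr (t - 1)) * indicator {0<..} x \<partial>lborel)"
    by (rule subst_pow_enn[OF b t fm])
  also have "(\<integral>\<^sup>+x. f (b * x powr t) * ennreal (b * t * x powr (t - 1)) * indicator {0<..} x \<partial>lborel) +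
      (\<integral>\<^sup>+x. f x * indicator {..0} x \<partial>lborel) =
      (\<integral>\<^sup>+x. f (b * x powr t) * ennreal (b * t * x powr (t - 1)) * indicator {0<..} x + f x * indicator {..0} x \<partial>lborel)"
    by (rule nn_integral_add[symmetric]) measurable
  also have "\<dots> = (\<integral>\<^sup>+x. f (if 0 < x then b * x powr t else x) * (if 0 < x then ennreal (b * t * x powr (t - 1)) else 1) \<partial>lborel)"
    by (intro nn_integral_cong) (auto simp: indicator_def)
  finally show ?thesis .
qed



definition fI :: "nat \<Rightarrow> real \<Rightarrow> real \<Rightarrow> (nat \<Rightarrow> real) \<Rightarrow> (nat \<Rightarrow> real) \<Rightarrow> (nat \<Rightarrow> real) \<Rightarrow> real" where
  "fI K s n al ga y = (\<Sum>k<K. ga k * y k powr s) powr n * (\<Prod>i<K. y i powr (al i - 1))"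

definition hF :: "nat \<Rightarrow> real \<Rightarrow> real \<Rightarrow> (nat \<Rightarrow> real) \<Rightarrow> (nat \<Rightarrow> real) \<Rightarrow> (nat \<Rightarrow> real) \<Rightarrow> real" where
  "hF K s n al ga z = (if \<forall>i<K. 0 < z i then fI K s n al ga z / (\<Sum>j<K. z j) powr ((\<Sum>i<K. al i) + s * n) else 0)"

definition gR :: "nat \<Rightarrow> real \<Rightarrow> real \<Rightarrow> (nat \<Rightarrow> real) \<Rightarrow> (nat \<Rightarrow> real) \<Rightarrow> real \<Rightarrow> (nat \<Rightarrow> real) \<Rightarrow> (nat \<Rightarrow> real) \<Rightarrow> real" where
  "gR K s n al ga tau be x = (\<Sum>k<K. be k powr s * ga k * x k powr (s * tau)) powr n
                 * (\<Prod>i<K. x i powr (tau * al i - 1))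
                 / (\<Sum>j<K. be j * x j powr tau) powr ((\<Sum>i<K. al i) + s * n)"

definition hG :: "nat \<Rightarrow> real \<Rightarrow> real \<Rightarrow> (nat \<Rightarrow> real) \<Rightarrow> (nat \<Rightarrow> real) \<Rightarrow> real \<Rightarrow> (nat \<Rightarrow> real) \<Rightarrow> (nat \<Rightarrow> real) \<Rightarrow> real" where
  "hG K s n al ga tau be z = (if \<forall>i<K. 0 < z i then
      (tau ^ (K - 1) * (\<Prod>l<K. be l powr al l)) * gR K s n al ga tau be z else 0)"

lemma prod_powr_const:
  fixes t :: real assumes "t > 0"
  shows "(\<Prod>i<K. t powr (f i)) = t powr (\<Sum>i<K. f i)"
  using assms by (simp add: powr_sum)

lemma hF_hom:
  fixes t :: real
  assumes t: "t > 0" and z: "\<forall>i<K. 0 < z i" and ga: "\<forall>i<K. 0 < ga i"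
  shows "hF K s n al ga (\<lambda>i. t * z i) = t powr (- real K) * hF K s n al ga z"
proof -
  define S where "S = (\<Sum>k<K. ga k * z k powr s)"
  define P where "P = (\<Prod>i<K. z i powr (al i - 1))"
  define D where "D = (\<Sum>j<K. z j)"
  define A where "A = (\<Sum>i<K. al i)"
  have S0: "0 \<le> S" unfolding S_def by (rule sum_nonneg) (use ga in \<open>auto intro!: mult_nonneg_nonneg simp: le_less\<close>)
  have tz: "\<forall>i<K. 0 < t * z i" using t z by simp
  have S1: "(\<Sum>k<K. ga k * (t * z k) powr s) = t powr s * S"
    unfolding S_def sum_distrib_left using t z
    by (intro sum.cong refl) (simp add: powr_mult less_imp_le)
  have P1: "(\<Prod>i<K. (t * z i) powr (al i - 1)) = t powr (A - real K) * P"
  proof -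
    have "(\<Prod>i<K. (t * z i) powr (al i - 1)) = (\<Prod>i<K. t powr (al i - 1) * z i powr (al i - 1))"
      using t z by (intro prod.cong refl) (simp add: powr_mult less_imp_le)
    also have "\<dots> = (\<Prod>i<K. t powr (al i - 1)) * P" unfolding P_def by (rule prod.distrib)
    also have "(\<Prod>i<K. t powr (al i - 1)) = t powr (\<Sum>i<K. al i - 1)" using t by (rule prod_powr_const)
    also have "(\<Sum>i<K. al i - 1) = A - real K" unfolding A_def by (simp add: sum_subtractf)
    finally show ?thesis .
  qed
  have D1: "(\<Sum>j<K. t * z j) = t * D" unfolding D_def by (simp add: sum_distrib_left)
  have D0: "0 \<le> D" unfolding D_def by (rule sum_nonneg) (use z in \<open>auto simp: le_less\<close>)
  have "hF K s n al ga (\<lambda>i. t * z i) = (t powr s * S) powr n * (t powr (A - real K) * P) / (t * D) powr (A + s * n)"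
    unfolding hF_def fI_def using tz S1 P1 D1 by (simp add: A_def)
  also have "\<dots> = (t powr (s * n) * t powr (A - real K)) * (S powr n * P) / (t powr (A + s * n) * D powr (A + s * n))"
    using t S0 D0 by (simp add: powr_mult powr_powr ac_simps)
  also have "t powr (s * n) * t powr (A - real K) = t powr (- real K) * t powr (A + s * n)"
    by (simp add: powr_add[symmetric] algebra_simps)
  also have "t powr (- real K) * t powr (A + s * n) * (S powr n * P) / (t powr (A + s * n) * D powr (A + s * n)) =
      t powr (- real K) * (S powr n * P / D powr (A + s * n))"
    using t by (simp add: field_simps)
  also have "S powr n * P / D powr (A + s * n) = hF K s n al ga z"
    unfolding hF_def fI_def S_def P_def D_def A_def using z by simp
  finally show ?thesis .
qed

lemma gR_hom:
  fixes t :: real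
  assumes t: "t > 0" and z: "\<forall>i<K. 0 < z i" and ga: "\<forall>i<K. 0 < ga i" and be: "\<forall>i<K. 0 < be i"
  shows "gR K s n al ga tau be (\<lambda>i. t * z i) = t powr (- real K) * gR K s n al ga tau be z"
proof -
  define S where "S = (\<Sum>k<K. be k powr s * ga k * z k powr (s * tau))"
  define P where "P = (\<Prod>i<K. z i powr (tau * al i - 1))"
  define D where "D = (\<Sum>j<K. be j * z j powr tau)"
  define A where "A = (\<Sum>i<K. al i)"
  have S0: "0 \<le> S" unfolding S_def by (rule sum_nonneg) (use ga in \<open>auto intro!: mult_nonneg_nonneg simp: le_less\<close>)
  have S1: "(\<Sum>k<K. be k powr s * ga k * (t * z k) powr (s * tau)) = t powr (s * tau) * S"
    unfolding S_def sum_distrib_left using t z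
    by (intro sum.cong refl) (simp add: powr_mult less_imp_le)
  have P1: "(\<Prod>i<K. (t * z i) powr (tau * al i - 1)) = t powr (tau * A - real K) * P"
  proof -
    have "(\<Prod>i<K. (t * z i) powr (tau * al i - 1)) = (\<Prod>i<K. t powr (tau * al i - 1) * z i powr (tau * al i - 1))"
      using t z by (intro prod.cong refl) (simp add: powr_mult less_imp_le)
    also have "\<dots> = (\<Prod>i<K. t powr (tau * al i - 1)) * P" unfolding P_def by (rule prod.distrib)
    also have "(\<Prod>i<K. t powr (tau * al i - 1)) = t powr (\<Sum>i<K. tau * al i - 1)" using t by (rule prod_powr_const)
    also have "(\<Sum>i<K. tau * al i - 1) = tau * A - real K" unfolding A_def by (simp add: sum_subtractf sum_distrib_left)
    finally show ?thesis .
  qed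
  have D1: "(\<Sum>j<K. be j * (t * z j) powr tau) = t powr tau * D"
    unfolding D_def sum_distrib_left using t z
    by (intro sum.cong refl) (simp add: powr_mult less_imp_le)
  have D0: "0 \<le> D" unfolding D_def by (rule sum_nonneg) (use be in \<open>auto intro!: mult_nonneg_nonneg simp: le_less\<close>)
  have "gR K s n al ga tau be (\<lambda>i. t * z i) = (t powr (s * tau) * S) powr n * (t powr (tau * A - real K) * P) / (t powr tau * D) powr (A + s * n)"
    unfolding gR_def using S1 P1 D1 by (simp add: A_def)
  also have "\<dots> = (t powr (s * tau * n) * t powr (tau * A - real K)) * (S powr n * P) / (t powr (tau * (A + s * n)) * D powr (A + s * n))"
    using t S0 D0 by (simp add: powr_mult powr_powr ac_simps)
  also have "t powr (s * tau * n) * t powr (tau * A - real K) = t powr (- real K) * t powr (tau * (A + s * n))"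
    by (simp add: powr_add[symmetric] algebra_simps)
  also have "t powr (- real K) * t powr (tau * (A + s * n)) * (S powr n * P) / (t powr (tau * (A + s * n)) * D powr (A + s * n)) =
      t powr (- real K) * (S powr n * P / D powr (A + s * n))"
    using t by (simp add: field_simps)
  also have "S powr n * P / D powr (A + s * n) = gR K s n al ga tau be z"
    unfolding gR_def S_def P_def D_def A_def by simp
  finally show ?thesis .
qed



lemma psi_id:
  fixes x be ga al :: "nat \<Rightarrow> real" and tau s n :: real and K :: nat
  assumes x: "\<forall>i<K. 0 < x i" and ga: "\<forall>i<K. 0 < ga i" and be: "\<forall>i<K. 0 < be i"
    and tau: "0 < tau" and K: "1 \<le> K"
  shows "hF K s n al ga (\<lambda>i\<in>{..<K}. be i * x i powr tau) * (\<Prod>i<K. be i * tau * x i powr (tau - 1)) =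
    tau * hG K s n al ga tau be x"
proof -
  define psi where "psi = (\<lambda>i\<in>{..<K}. be i * x i powr tau)"
  define S where "S = (\<Sum>k<K. be k powr s * ga k * x k powr (s * tau))"
  define D where "D = (\<Sum>j<K. be j * x j powr tau)"
  define E where "E = (\<Sum>i<K. al i) + s * n"
  have ppos: "\<forall>i<K. 0 < psi i" using x be by (auto simp: psi_def intro!: mult_pos_pos)
  have S1: "(\<Sum>k<K. ga k * psi k powr s) = S"
    unfolding S_def psi_def using x be
    by (intro sum.cong refl) (simp add: powr_mult powr_powr less_imp_le ac_simps)
  have D1: "(\<Sum>j<K. psi j) = D" unfolding D_def psi_def by simp
  have P1: "(\<Prod>i<K. psi i powr (al i - 1)) * (\<Prod>i<K. be i * tau * x i powr (tau - 1)) =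
      tau ^ K * (\<Prod>l<K. be l powr al l) * (\<Prod>i<K. x i powr (tau * al i - 1))"
  proof -
    have "(\<Prod>i<K. psi i powr (al i - 1)) * (\<Prod>i<K. be i * tau * x i powr (tau - 1)) =
       (\<Prod>i<K. psi i powr (al i - 1) * (be i * tau * x i powr (tau - 1)))"
      by (rule prod.distrib[symmetric])
    also have "\<dots> = (\<Prod>i<K. tau * (be i powr al i * x i powr (tau * al i - 1)))"
    proof (rule prod.cong[OF refl])
      fix i assume "i \<in> {..<K}"
      then have xi: "0 < x i" and bi: "0 < be i" using x be by auto
      have "psi i powr (al i - 1) = be i powr (al i - 1) * x i powr (tau * (al i - 1))"
        using xi bi \<open>i \<in> {..<K}\<close> by (simp add: psi_def powr_mult powr_powr ac_simps)
      moreover have "be i powr (al i - 1) * be i = be i powr al i"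
        using bi by (simp add: powr_diff)
      moreover have "x i powr (tau * (al i - 1)) * x i powr (tau - 1) = x i powr (tau * al i - 1)"
        using xi by (simp add: powr_add[symmetric] algebra_simps)
      ultimately show "psi i powr (al i - 1) * (be i * tau * x i powr (tau - 1)) =
          tau * (be i powr al i * x i powr (tau * al i - 1))"
        by (metis (no_types, lifting) mult.assoc mult.commute mult.left_commute)
    qed
    also have "\<dots> = tau ^ K * ((\<Prod>l<K. be l powr al l) * (\<Prod>i<K. x i powr (tau * al i - 1)))"
      by (simp add: prod.distrib)
    finally show ?thesis by (simp add: mult.assoc)
  qed
  have tK: "tau ^ K = tau * tau ^ (K - 1)" using K by (cases K) auto
  have "hF K s n al ga psi * (\<Prod>i<K. be i * tau * x i powr (tau - 1)) =
      S powr n * ((\<Prod>i<K. psi i powr (al i - 1)) * (\<Prod>i<K. be i * tau * x i powr (tau - 1))) / D powr E"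
    unfolding hF_def fI_def using ppos S1 D1 by (simp add: E_def)
  also have "\<dots> = tau * hG K s n al ga tau be x"
    unfolding P1 hG_def gR_def S_def[symmetric] D_def[symmetric] E_def[symmetric] tK using x
    by simp
  finally show ?thesis unfolding psi_def .
qed

lemma rho1_psi:
  fixes x be :: "nat \<Rightarrow> real" and tau :: real and K :: nat
  assumes x: "\<forall>i<K. 0 < x i" and be: "\<forall>i<K. 0 < be i" and tau: "0 < tau"
  shows "(\<Sum>k<K. ((\<lambda>i\<in>{..<K}. be i * x i powr tau) k / be k) powr (1 / tau)) = (\<Sum>k<K. x k)"
proof (intro sum.cong refl)
  fix k assume "k \<in> {..<K}"
  then have xk: "0 < x k" and bk: "0 < be k" using x be by auto
  have "be k * x k powr tau / be k = x k powr tau" by (rule nonzero_mult_div_cancel_left) (use bk in simp)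
  then have "((\<lambda>i\<in>{..<K}. be i * x i powr tau) k / be k) powr (1 / tau) = (x k powr tau) powr (1 / tau)"
    using \<open>k \<in> {..<K}\<close> by simp
  also have "\<dots> = x k" using xk tau by (simp add: powr_powr)
  finally show "((\<lambda>i\<in>{..<K}. be i * x i powr tau) k / be k) powr (1 / tau) = x k" .
qed

lemma fI_zero:
  assumes "\<forall>i<K. 0 \<le> y i" "\<not> (\<forall>i<K. 0 < y i)"
  shows "fI K s n al ga y = 0"
proof -
  obtain i where "i < K" "y i = 0" using assms by force
  then have "(\<Prod>i<K. y i powr (al i - 1)) = 0" by (intro prod_zero) auto
  then show ?thesis by (simp add: fI_def)
qed

lemma gR_zero:
  assumes "\<forall>i<K. 0 \<le> y i" "\<not> (\<forall>i<K. 0 < y i)"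
  shows "gR K s n al ga tau be y = 0"
proof -
  obtain i where "i < K" "y i = 0" using assms by force
  then have "(\<Prod>i<K. y i powr (tau * al i - 1)) = 0" by (intro prod_zero) auto
  then show ?thesis by (simp add: gR_def)
qed

lemma sp_nonneg:
  assumes "y \<in> simplex_dom (Suc m)"
  shows "\<forall>i<Suc m. 0 \<le> simplex_pt (Suc m) y i"
  using assms by (auto simp: simplex_dom_def simplex_pt_def)

lemma sp_sum:
  shows "(\<Sum>i<Suc m. simplex_pt (Suc m) y i) = 1"
  by (simp add: simplex_pt_def)



lemma pos_set_K:
  fixes K :: nat shows "{z \<in> space (PiM {..<K} (\<lambda>_. lborel)). \<forall>i<K. 0 < (z i::real)} \<in> sets (PiM {..<K} (\<lambda>_. lborel))"
proof -
  have "{z \<in> space (PiM {..<K} (\<lambda>_. lborel)). \<forall>i<K. 0 < (z i::real)} =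
      {z \<in> space (PiM {..<K} (\<lambda>_. lborel)). \<forall>i\<in>{..<K}. 0 < (z i::real)}" by auto
  also have "\<dots> \<in> sets (PiM {..<K} (\<lambda>_. lborel))" by (rule pos_sets) simp
  finally show ?thesis .
qed

lemma fI_meas: "fI K s n al ga \<in> borel_measurable (PiM {..<K} (\<lambda>_. lborel))"
  unfolding fI_def by measurable

lemma gR_meas: "gR K s n al ga tau be \<in> borel_measurable (PiM {..<K} (\<lambda>_. lborel))"
  unfolding gR_def by measurable

lemma hF_meas: "hF K s n al ga \<in> borel_measurable (PiM {..<K} (\<lambda>_. lborel))"
proof -
  have "(\<lambda>z. fI K s n al ga z / (\<Sum>j<K. z j) powr ((\<Sum>i<K. al i) + s * n)) \<in> borel_measurable (PiM {..<K} (\<lambda>_. lborel))"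
    using fI_meas[of K s n al ga] by measurable
  then have "(\<lambda>z. if \<forall>i<K. 0 < z i then fI K s n al ga z / (\<Sum>j<K. z j) powr ((\<Sum>i<K. al i) + s * n) else 0)
      \<in> borel_measurable (PiM {..<K} (\<lambda>_. lborel))"
    by (rule measurable_If[OF _ measurable_const pos_set_K]) simp
  then show ?thesis unfolding hF_def[abs_def] .
qed

lemma hG_meas: "hG K s n al ga tau be \<in> borel_measurable (PiM {..<K} (\<lambda>_. lborel))"
proof -
  have "(\<lambda>z. (tau ^ (K - 1) * (\<Prod>l<K. be l powr al l)) * gR K s n al ga tau be z) \<in> borel_measurable (PiM {..<K} (\<lambda>_. lborel))"
    using gR_meas[of K s n al ga tau be] by measurable
  then have "(\<lambda>z. if \<forall>i<K. 0 < z i then (tau ^ (K - 1) * (\<Prod>l<K. be l powr al l)) * gR K s n al ga tau be z else 0)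
      \<in> borel_measurable (PiM {..<K} (\<lambda>_. lborel))"
    by (rule measurable_If[OF _ measurable_const pos_set_K]) simp
  then show ?thesis unfolding hG_def[abs_def] .
qed

lemma fI_loc: "\<forall>i<K. x i = y i \<Longrightarrow> fI K s n al ga x = fI K s n al ga y"
  unfolding fI_def by (intro arg_cong2[where f = "(*)"] arg_cong2[where f = "(powr)"] sum.cong prod.cong refl) auto

lemma gR_loc: "\<forall>i<K. x i = y i \<Longrightarrow> gR K s n al ga tau be x = gR K s n al ga tau be y"
  unfolding gR_def by (intro arg_cong2[where f = "(/)"] arg_cong2[where f = "(*)"] arg_cong2[where f = "(powr)"] sum.cong prod.cong refl) auto

lemma hF_loc: "\<forall>i<K. x i = y i \<Longrightarrow> hF K s n al ga x = hF K s n al ga y"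
proof -
  assume a: "\<forall>i<K. x i = y i"
  then have "(\<Sum>j<K. x j) = (\<Sum>j<K. y j)" by (intro sum.cong) auto
  moreover have "(\<forall>i<K. 0 < x i) = (\<forall>i<K. 0 < y i)" using a by auto
  moreover note fI_loc[OF a]
  ultimately show ?thesis unfolding hF_def by (simp only:)
qed

lemma hG_loc: "\<forall>i<K. x i = y i \<Longrightarrow> hG K s n al ga tau be x = hG K s n al ga tau be y"
proof -
  assume a: "\<forall>i<K. x i = y i"
  then have "(\<forall>i<K. 0 < x i) = (\<forall>i<K. 0 < y i)" by auto
  moreover note gR_loc[OF a]
  ultimately show ?thesis unfolding hG_def by (simp only:)
qed

lemma fI_nn: "0 \<le> fI K s n al ga x" unfolding fI_def by (auto intro!: prod_nonneg mult_nonneg_nonneg)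
lemma gR_nn: "0 \<le> gR K s n al ga tau be x" unfolding gR_def by (auto intro!: prod_nonneg divide_nonneg_nonneg mult_nonneg_nonneg)
lemma hF_nn: "0 \<le> hF K s n al ga x" unfolding hF_def using fI_nn by (auto intro!: divide_nonneg_nonneg)
lemma hG_nn: "\<forall>i<K. 0 < be i \<Longrightarrow> 0 \<le> tau \<Longrightarrow> 0 \<le> hG K s n al ga tau be x"
  unfolding hG_def using gR_nn by (auto intro!: mult_nonneg_nonneg prod_nonneg)

lemma comp_sp_meas:
  assumes hm: "h \<in> borel_measurable (PiM {..<Suc m} (\<lambda>_. lborel))"
    and loc: "\<And>x y. \<forall>i<Suc m. x i = y i \<Longrightarrow> h x = h y"
  shows "(\<lambda>y. h (simplex_pt (Suc m) y)) \<in> borel_measurable (PiM {..<m} (\<lambda>_. lborel))"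
proof -
  have "(\<lambda>y. h (simplex_pt (Suc m) y)) = (\<lambda>y. h (\<lambda>i\<in>{..<Suc m}. 1 * simplex_pt (Suc m) y i))"
    by (intro ext loc) auto
  also have "\<dots> \<in> borel_measurable (PiM {..<m} (\<lambda>_. lborel))"
    by (rule measurable_comp[OF sp_meas[where m=m and c=1] hm, unfolded comp_def])
  finally show ?thesis .
qed

lemma sd_meas: "(\<lambda>y. indicator (simplex_dom (Suc m)) y :: ennreal) \<in> borel_measurable (PiM {..<m} (\<lambda>_. lborel))"
proof -
  have "{y \<in> space (PiM {..<m} (\<lambda>_. lborel)). y \<in> simplex_dom (Suc m)} \<in> sets (PiM {..<m} (\<lambda>_. lborel))"
    unfolding simplex_dom_def by measurable
  then show ?thesis by (rule borel_measurable_indicator')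
qed

lemma sd_meas_real: "(\<lambda>y. indicator (simplex_dom (Suc m)) y :: real) \<in> borel_measurable (PiM {..<m} (\<lambda>_. lborel))"
proof -
  have "{y \<in> space (PiM {..<m} (\<lambda>_. lborel)). y \<in> simplex_dom (Suc m)} \<in> sets (PiM {..<m} (\<lambda>_. lborel))"
    unfolding simplex_dom_def by measurable
  then show ?thesis by (rule borel_measurable_indicator')
qed

lemma SI:
  assumes fm: "(\<lambda>y. f (simplex_pt (Suc m) y)) \<in> borel_measurable (PiM {..<m} (\<lambda>_. lborel))"
    and nn: "\<And>x. 0 \<le> f x"
  shows "simplex_integral (Suc m) f =
    enn2real (\<integral>\<^sup>+y. indicator (simplex_dom (Suc m)) y * ennreal (f (simplex_pt (Suc m) y)) \<partial>PiM {..<m} (\<lambda>_. lborel))"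
proof -
  have "simplex_integral (Suc m) f = integral\<^sup>L (PiM {..<m} (\<lambda>_. lborel))
      (\<lambda>y. indicator (simplex_dom (Suc m)) y *\<^sub>R f (simplex_pt (Suc m) y))"
    unfolding simplex_integral_def set_lebesgue_integral_def by simp
  also have "\<dots> = enn2real (\<integral>\<^sup>+y. ennreal (indicator (simplex_dom (Suc m)) y *\<^sub>R f (simplex_pt (Suc m) y)) \<partial>PiM {..<m} (\<lambda>_. lborel))"
  proof (rule integral_eq_nn_integral)
    show "(\<lambda>y. indicator (simplex_dom (Suc m)) y *\<^sub>R f (simplex_pt (Suc m) y)) \<in> borel_measurable (PiM {..<m} (\<lambda>_. lborel))"
      unfolding real_scaleR_def by (rule borel_measurable_times[OF sd_meas_real fm])
    show "AE x in PiM {..<m} (\<lambda>_. lborel). 0 \<le> indicator (simplex_dom (Suc m)) x *\<^sub>R f (simplex_pt (Suc m) x)"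
      using nn by (auto simp: indicator_def)
  qed
  also have "(\<integral>\<^sup>+y. ennreal (indicator (simplex_dom (Suc m)) y *\<^sub>R f (simplex_pt (Suc m) y)) \<partial>PiM {..<m} (\<lambda>_. lborel)) =
      (\<integral>\<^sup>+y. indicator (simplex_dom (Suc m)) y * ennreal (f (simplex_pt (Suc m) y)) \<partial>PiM {..<m} (\<lambda>_. lborel))"
    by (intro nn_integral_cong) (auto simp: indicator_def)
  finally show ?thesis .
qed



lemma main1:
  fixes m :: nat and s n tau :: real and al ga be :: "nat \<Rightarrow> real"
  assumes s: "0 < s" and ga: "\<forall>i<Suc m. 0 < ga i" and tau: "0 < tau" and be: "\<forall>i<Suc m. 0 < be i"
  shows "I_int (Suc m) s n al ga = tau ^ m * (\<Prod>l<Suc m. be l powr al l) * simplex_integral (Suc m) (gR (Suc m) s n al ga tau be)"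
proof -
  interpret product_sigma_finite "\<lambda>_. lborel" by standard
  define J where "J h = (\<integral>\<^sup>+y. indicator (simplex_dom (Suc m)) y * ennreal (h (simplex_pt (Suc m) y)) \<partial>PiM {..<m} (\<lambda>_. lborel))"
    for h :: "(nat \<Rightarrow> real) \<Rightarrow> real"
  define C where "C = tau ^ m * (\<Prod>l<Suc m. be l powr al l)"
  have C0: "0 \<le> C" unfolding C_def using tau by (auto intro!: prod_nonneg mult_nonneg_nonneg)
  define rho1 where "rho1 z = (\<Sum>k<Suc m. (z k / be k) powr (1 / tau))" for z :: "nat \<Rightarrow> real"
  define rho0 where "rho0 z = (\<Sum>k<Suc m. z k)" for z :: "nat \<Rightarrow> real"
  have rho1m: "rho1 \<in> borel_measurable (PiM {..<Suc m} (\<lambda>_. lborel))" unfolding rho1_def by measurable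
  have rho0m: "rho0 \<in> borel_measurable (PiM {..<Suc m} (\<lambda>_. lborel))" unfolding rho0_def by measurable
  note hFm = hF_meas[of "Suc m" s n al ga]
  note hGm = hG_meas[of "Suc m" s n al ga tau be]
  have S1: "I_int (Suc m) s n al ga = enn2real (J (fI (Suc m) s n al ga))"
  proof -
    have "I_int (Suc m) s n al ga = simplex_integral (Suc m) (fI (Suc m) s n al ga)"
      unfolding I_int_def fI_def[abs_def] by simp
    also have "\<dots> = enn2real (J (fI (Suc m) s n al ga))"
      unfolding J_def by (rule SI[OF comp_sp_meas[OF fI_meas fI_loc] fI_nn])
    finally show ?thesis .
  qed
  have S5: "simplex_integral (Suc m) (gR (Suc m) s n al ga tau be) = enn2real (J (gR (Suc m) s n al ga tau be))"
    unfolding J_def by (rule SI[OF comp_sp_meas[OF gR_meas gR_loc] gR_nn])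
  have S2: "J (fI (Suc m) s n al ga) = J (hF (Suc m) s n al ga)"
    unfolding J_def
  proof (rule nn_integral_cong)
    fix y :: "nat \<Rightarrow> real"
    show "indicator (simplex_dom (Suc m)) y * ennreal (fI (Suc m) s n al ga (simplex_pt (Suc m) y)) =
        indicator (simplex_dom (Suc m)) y * ennreal (hF (Suc m) s n al ga (simplex_pt (Suc m) y))"
    proof (cases "y \<in> simplex_dom (Suc m)")
      case True
      show ?thesis
      proof (cases "\<forall>i<Suc m. 0 < simplex_pt (Suc m) y i")
        case True
        then show ?thesis using sp_sum[of m y] by (simp add: hF_def del: sum.lessThan_Suc)
      next
        case False
        then show ?thesis using fI_zero[OF sp_nonneg[OF \<open>y \<in> simplex_dom (Suc m)\<close>] False]
          by (simp add: hF_def)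
      qed
    qed simp
  qed
  have S4: "J (hG (Suc m) s n al ga tau be) = ennreal C * J (gR (Suc m) s n al ga tau be)"
  proof -
    have "J (hG (Suc m) s n al ga tau be) = (\<integral>\<^sup>+y. ennreal C * (indicator (simplex_dom (Suc m)) y * ennreal (gR (Suc m) s n al ga tau be (simplex_pt (Suc m) y))) \<partial>PiM {..<m} (\<lambda>_. lborel))"
      unfolding J_def
    proof (rule nn_integral_cong)
      fix y :: "nat \<Rightarrow> real"
      show "indicator (simplex_dom (Suc m)) y * ennreal (hG (Suc m) s n al ga tau be (simplex_pt (Suc m) y)) =
          ennreal C * (indicator (simplex_dom (Suc m)) y * ennreal (gR (Suc m) s n al ga tau be (simplex_pt (Suc m) y)))"
      proof (cases "y \<in> simplex_dom (Suc m)")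
        case True
        show ?thesis
        proof (cases "\<forall>i<Suc m. 0 < simplex_pt (Suc m) y i")
          case True
          have e: "hG (Suc m) s n al ga tau be (simplex_pt (Suc m) y) = C * gR (Suc m) s n al ga tau be (simplex_pt (Suc m) y)"
            unfolding hG_def C_def using True by simp
          show ?thesis unfolding e ennreal_mult'[OF C0] by (simp only: ac_simps)
        next
          case False
          then show ?thesis using gR_zero[OF sp_nonneg[OF \<open>y \<in> simplex_dom (Suc m)\<close>] False]
            by (simp add: hG_def)
        qed
      qed simp
    qed
    also have "\<dots> = ennreal C * J (gR (Suc m) s n al ga tau be)"
      unfolding J_def
      by (rule nn_integral_cmult) (rule borel_measurable_times_ennreal[OF sd_meas measurable_compose[OF comp_sp_meas[OF gR_meas gR_loc] measurable_ennreal]])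
    finally show ?thesis .
  qed
  have HF: "(\<integral>\<^sup>+z. ennreal (hF (Suc m) s n al ga z * rho1 z * exp (- rho1 z)) \<partial>PiM {..<Suc m} (\<lambda>_. lborel)) =
      ennreal (1 / (1 / tau)) * J (hF (Suc m) s n al ga)"
    unfolding J_def
  proof (rule hom)
    show "hF (Suc m) s n al ga \<in> borel_measurable (PiM {..<Suc m} (\<lambda>_. lborel))" by (rule hFm)
    show "rho1 \<in> borel_measurable (PiM {..<Suc m} (\<lambda>_. lborel))" by (rule rho1m)
    show "hF (Suc m) s n al ga x = hF (Suc m) s n al ga y" if "\<forall>i<Suc m. x i = y i" for x y
      using that by (rule hF_loc)
    show "rho1 x = rho1 y" if "\<forall>i<Suc m. x i = y i" for x y
      unfolding rho1_def using that by (intro sum.cong) auto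
    show "hF (Suc m) s n al ga z = 0" if "\<not> (\<forall>i<Suc m. 0 < z i)" for z
      unfolding hF_def by (rule if_not_P[OF that])
    show "0 \<le> hF (Suc m) s n al ga z" for z by (rule hF_nn)
    show "hF (Suc m) s n al ga (\<lambda>i. t * z i) = t powr (- real (Suc m)) * hF (Suc m) s n al ga z"
      if "0 < t" "\<forall>i<Suc m. 0 < z i" for z t
      using hF_hom[OF that ga] .
    show "rho1 (\<lambda>i. t * z i) = t powr (1 / tau) * rho1 z" if t: "0 < t" and z: "\<forall>i<Suc m. 0 < z i" for z t
      unfolding rho1_def sum_distrib_left
    proof (rule sum.cong[OF refl])
      fix k assume "k \<in> {..<Suc m}"
      then have "0 < z k" "0 < be k" using z be by auto
      have e: "t * z k / be k = t * (z k / be k)" by simp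
      have "(t * (z k / be k)) powr (1 / tau) = t powr (1 / tau) * (z k / be k) powr (1 / tau)"
        by (rule powr_mult)
      then show "(t * z k / be k) powr (1 / tau) = t powr (1 / tau) * (z k / be k) powr (1 / tau)"
        unfolding e .
    qed
    show "0 < rho1 z" if z: "\<forall>i<Suc m. 0 < z i" for z
      unfolding rho1_def
    proof (rule sum_pos)
      fix k assume "k \<in> {..<Suc m}"
      then have "0 < z k" "0 < be k" using z be by auto
      then show "0 < (z k / be k) powr (1 / tau)" by simp
    qed auto
    show "0 < 1 / tau" using tau by simp
  qed
  have HG: "(\<integral>\<^sup>+z. ennreal (hG (Suc m) s n al ga tau be z * rho0 z * exp (- rho0 z)) \<partial>PiM {..<Suc m} (\<lambda>_. lborel)) =
      ennreal (1 / 1) * J (hG (Suc m) s n al ga tau be)"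
    unfolding J_def
  proof (rule hom)
    show "hG (Suc m) s n al ga tau be \<in> borel_measurable (PiM {..<Suc m} (\<lambda>_. lborel))" by (rule hGm)
    show "rho0 \<in> borel_measurable (PiM {..<Suc m} (\<lambda>_. lborel))" by (rule rho0m)
    show "hG (Suc m) s n al ga tau be x = hG (Suc m) s n al ga tau be y" if "\<forall>i<Suc m. x i = y i" for x y
      using that by (rule hG_loc)
    show "rho0 x = rho0 y" if "\<forall>i<Suc m. x i = y i" for x y
      unfolding rho0_def using that by (intro sum.cong) auto
    show "hG (Suc m) s n al ga tau be z = 0" if "\<not> (\<forall>i<Suc m. 0 < z i)" for z
      unfolding hG_def by (rule if_not_P[OF that])
    show "0 \<le> hG (Suc m) s n al ga tau be z" for z using hG_nn be tau by simp
    show "hG (Suc m) s n al ga tau be (\<lambda>i. t * z i) = t powr (- real (Suc m)) * hG (Suc m) s n al ga tau be z"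
      if t: "0 < t" and z: "\<forall>i<Suc m. 0 < z i" for z t
    proof -
      have "\<forall>i<Suc m. 0 < t * z i" using t z by simp
      then show ?thesis using z gR_hom[OF t z ga be] by (simp add: hG_def)
    qed
    show "rho0 (\<lambda>i. t * z i) = t powr 1 * rho0 z" if t: "0 < t" and z: "\<forall>i<Suc m. 0 < z i" for z t
      unfolding rho0_def using t by (simp add: sum_distrib_left[symmetric] distrib_left del: sum.lessThan_Suc)
    show "0 < rho0 z" if z: "\<forall>i<Suc m. 0 < z i" for z
      unfolding rho0_def by (rule sum_pos) (use z in auto)
    show "(0::real) < 1" by simp
  qed
  define T where "T i u = (if 0 < u then be i * u powr tau else u)" for i and u :: real
  define D where "D i u = (if 0 < u then ennreal (be i * tau * u powr (tau - 1)) else 1)" for i and u :: real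
  have DS: "(\<integral>\<^sup>+z. ennreal (hF (Suc m) s n al ga z * rho1 z * exp (- rho1 z)) \<partial>PiM {..<Suc m} (\<lambda>_. lborel)) =
      (\<integral>\<^sup>+x. ennreal (hF (Suc m) s n al ga (\<lambda>i\<in>{..<Suc m}. T i (x i)) * rho1 (\<lambda>i\<in>{..<Suc m}. T i (x i)) *
          exp (- rho1 (\<lambda>i\<in>{..<Suc m}. T i (x i)))) * (\<Prod>i\<in>{..<Suc m}. D i (x i)) \<partial>PiM {..<Suc m} (\<lambda>_. lborel))"
  proof (rule diag_subst[where F = "\<lambda>z. ennreal (hF (Suc m) s n al ga z * rho1 z * exp (- rho1 z))"])
    show "T i \<in> borel_measurable borel" for i unfolding T_def by measurable
    show "D i \<in> borel_measurable borel" for i unfolding D_def by measurable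
    show "(\<integral>\<^sup>+x. f x \<partial>lborel) = (\<integral>\<^sup>+x. f (T i x) * D i x \<partial>lborel)"
      if "i \<in> {..<Suc m}" "f \<in> borel_measurable borel" for i and f :: "real \<Rightarrow> ennreal"
    proof -
      have "0 < be i" using that be by auto
      then show ?thesis unfolding T_def D_def by (rule subst_piece[OF _ tau that(2)])
    qed
    show "(\<lambda>z. ennreal (hF (Suc m) s n al ga z * rho1 z * exp (- rho1 z))) \<in> borel_measurable (PiM {..<Suc m} (\<lambda>_. lborel))"
      using hFm rho1m by measurable
  qed simp
  also have "\<dots> = (\<integral>\<^sup>+x. ennreal tau * ennreal (hG (Suc m) s n al ga tau be x * rho0 x * exp (- rho0 x)) \<partial>PiM {..<Suc m} (\<lambda>_. lborel))"
  proof (rule nn_integral_cong)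
    fix x :: "nat \<Rightarrow> real"
    let ?psi = "\<lambda>i\<in>{..<Suc m}. T i (x i)"
    show "ennreal (hF (Suc m) s n al ga ?psi * rho1 ?psi * exp (- rho1 ?psi)) * (\<Prod>i\<in>{..<Suc m}. D i (x i)) =
        ennreal tau * ennreal (hG (Suc m) s n al ga tau be x * rho0 x * exp (- rho0 x))"
    proof (cases "\<forall>i<Suc m. 0 < x i")
      case True
      have ps: "?psi = (\<lambda>i\<in>{..<Suc m}. be i * x i powr tau)"
        using True by (auto simp: T_def fun_eq_iff)
      have pd: "(\<Prod>i\<in>{..<Suc m}. D i (x i)) = ennreal (\<Prod>i<Suc m. be i * tau * x i powr (tau - 1))"
      proof -
        have "(\<Prod>i\<in>{..<Suc m}. D i (x i)) = (\<Prod>i\<in>{..<Suc m}. ennreal (be i * tau * x i powr (tau - 1)))"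
          using True by (intro prod.cong refl) (auto simp: D_def)
        also have "\<dots> = ennreal (\<Prod>i<Suc m. be i * tau * x i powr (tau - 1))"
        proof (rule prod_ennreal)
          fix i assume "i \<in> {..<Suc m}"
          then have "0 < be i" using be by auto
          then show "0 \<le> be i * tau * x i powr (tau - 1)" using tau by simp
        qed
        finally show ?thesis .
      qed
      have r1: "rho1 ?psi = rho0 x" unfolding ps rho1_def rho0_def by (rule rho1_psi[OF True be tau])
      have pid: "hF (Suc m) s n al ga (\<lambda>i\<in>{..<Suc m}. be i * x i powr tau) * (\<Prod>i<Suc m. be i * tau * x i powr (tau - 1)) =
          tau * hG (Suc m) s n al ga tau be x"
        by (rule psi_id[OF True ga be tau]) simp
      have nn1: "0 \<le> hF (Suc m) s n al ga (\<lambda>i\<in>{..<Suc m}. be i * x i powr tau) * rho0 x * exp (- rho0 x)"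
      proof -
        have "0 \<le> rho0 x" unfolding rho0_def by (rule sum_nonneg) (use True in \<open>auto simp: le_less\<close>)
        then show ?thesis by (intro mult_nonneg_nonneg hF_nn) auto
      qed
      have nn2: "0 \<le> (\<Prod>i<Suc m. be i * tau * x i powr (tau - 1))"
      proof (rule prod_nonneg)
        fix i assume "i \<in> {..<Suc m}"
        then have "0 < be i" using be by auto
        then show "0 \<le> be i * tau * x i powr (tau - 1)" using tau by simp
      qed
      have "ennreal (hF (Suc m) s n al ga ?psi * rho1 ?psi * exp (- rho1 ?psi)) * (\<Prod>i\<in>{..<Suc m}. D i (x i)) =
          ennreal (hF (Suc m) s n al ga (\<lambda>i\<in>{..<Suc m}. be i * x i powr tau) * rho0 x * exp (- rho0 x) *
            (\<Prod>i<Suc m. be i * tau * x i powr (tau - 1)))"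
        unfolding r1 pd unfolding ps using nn1 nn2 by (simp add: ennreal_mult)
      also have "hF (Suc m) s n al ga (\<lambda>i\<in>{..<Suc m}. be i * x i powr tau) * rho0 x * exp (- rho0 x) *
            (\<Prod>i<Suc m. be i * tau * x i powr (tau - 1)) = tau * (hG (Suc m) s n al ga tau be x * rho0 x * exp (- rho0 x))"
      proof -
        have g: "A * r * e * P = (A * P) * (r * e)" for A r e P :: real by (simp only: ac_simps)
        have g2: "(tau * B) * (r * e) = tau * (B * r * e)" for B r e :: real by (simp only: ac_simps)
        show ?thesis unfolding g pid g2 ..
      qed
      also have "ennreal \<dots> = ennreal tau * ennreal (hG (Suc m) s n al ga tau be x * rho0 x * exp (- rho0 x))"
        using tau by (intro ennreal_mult') simp
      finally show ?thesis .
    next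
      case False
      then obtain i where i: "i < Suc m" "\<not> 0 < x i" by auto
      then have "\<not> (\<forall>i<Suc m. 0 < ?psi i)" by (auto simp: T_def intro!: exI[of _ i])
      then have "hF (Suc m) s n al ga ?psi = 0" unfolding hF_def by (rule if_not_P)
      moreover have "hG (Suc m) s n al ga tau be x = 0" unfolding hG_def by (rule if_not_P[OF False])
      ultimately show ?thesis by simp
    qed
  qed
  also have "\<dots> = ennreal tau * (\<integral>\<^sup>+x. ennreal (hG (Suc m) s n al ga tau be x * rho0 x * exp (- rho0 x)) \<partial>PiM {..<Suc m} (\<lambda>_. lborel))"
    by (rule nn_integral_cmult) (use hGm rho0m in measurable)
  finally have "ennreal tau * J (hF (Suc m) s n al ga) = ennreal tau * J (hG (Suc m) s n al ga tau be)"
    using HF HG tau by simp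
  then have S3: "J (hF (Suc m) s n al ga) = J (hG (Suc m) s n al ga tau be)"
    using tau by (simp add: ennreal_mult_cancel_left)
  have "I_int (Suc m) s n al ga = enn2real (ennreal C * J (gR (Suc m) s n al ga tau be))"
    using S1 S2 S3 S4 by simp
  also have "\<dots> = C * simplex_integral (Suc m) (gR (Suc m) s n al ga tau be)"
    using C0 S5 by (simp add: enn2real_mult)
  finally show ?thesis unfolding C_def .
qed



lemma body_eq:
  fixes x ga al :: "nat \<Rightarrow> real" and s n :: real and K :: nat
  assumes x: "\<forall>i<K. 0 \<le> x i" and xs: "(\<Sum>i<K. x i) = 1" and ga: "\<forall>i<K. 0 < ga i" and s: "0 < s"
  shows "(\<Sum>k<K. (ga k powr (- (1 / s))) powr s * ga k * x k powr (s * (1 / s))) powr n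
          * (\<Prod>i<K. x i powr (1 / s * al i - 1))
          / (\<Sum>j<K. ga j powr (- (1 / s)) * x j powr (1 / s)) powr ((\<Sum>i<K. al i) + s * n) =
         (\<Prod>i<K. x i powr (al i / s - 1))
          / (\<Sum>j<K. x j powr (1 / s) / ga j powr (1 / s)) powr ((\<Sum>i<K. al i) + s * n)"
proof -
  have e1: "(\<Sum>k<K. (ga k powr (- (1 / s))) powr s * ga k * x k powr (s * (1 / s))) = (\<Sum>k<K. x k)"
  proof (rule sum.cong[OF refl])
    fix k assume "k \<in> {..<K}"
    then have g: "0 < ga k" and xk: "0 \<le> x k" using ga x by auto
    have "(ga k powr (- (1 / s))) powr s = ga k powr (- 1)" using s by (simp add: powr_powr)
    also have "\<dots> = inverse (ga k)" using g by (simp add: powr_minus)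
    finally have a: "(ga k powr (- (1 / s))) powr s * ga k = 1" using g by simp
    have b: "x k powr (s * (1 / s)) = x k" using s xk by simp
    show "(ga k powr (- (1 / s))) powr s * ga k * x k powr (s * (1 / s)) = x k" using a b by simp
  qed
  have e2: "(\<Prod>i<K. x i powr (1 / s * al i - 1)) = (\<Prod>i<K. x i powr (al i / s - 1))"
    by (intro prod.cong refl) simp
  have e3: "(\<Sum>j<K. ga j powr (- (1 / s)) * x j powr (1 / s)) = (\<Sum>j<K. x j powr (1 / s) / ga j powr (1 / s))"
    by (intro sum.cong refl) (simp add: powr_minus divide_inverse)
  show ?thesis unfolding e1 e2 e3 xs by simp
qed

lemma coef_eq:
  fixes ga al :: "nat \<Rightarrow> real" and s :: real and K :: nat
  assumes ga: "\<forall>i<K. 0 < ga i" and s: "0 < s"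
  shows "(1 / s) ^ (K - 1) * (\<Prod>l<K. (ga l powr (- (1 / s))) powr al l) =
    1 / (s ^ (K - 1) * (\<Prod>l<K. ga l powr (al l / s)))"
proof -
  have "(\<Prod>l<K. (ga l powr (- (1 / s))) powr al l) = (\<Prod>l<K. inverse (ga l powr (al l / s)))"
  proof (rule prod.cong[OF refl])
    fix l assume "l \<in> {..<K}"
    then have g: "0 < ga l" using ga by auto
    have "(ga l powr (- (1 / s))) powr al l = ga l powr (- (al l / s))" by (simp add: powr_powr)
    then show "(ga l powr (- (1 / s))) powr al l = inverse (ga l powr (al l / s))" by (simp add: powr_minus)
  qed
  also have "\<dots> = inverse (\<Prod>l<K. ga l powr (al l / s))"
    using prod_inversef[of "\<lambda>l. ga l powr (al l / s)" "{..<K}"] by (simp add: comp_def)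
  finally have e: "(\<Prod>l<K. (ga l powr (- (1 / s))) powr al l) = inverse (\<Prod>l<K. ga l powr (al l / s))" .
  show ?thesis unfolding e by (simp add: divide_inverse power_inverse inverse_mult_distrib)
qed

theorem mainTheorem2:
  fixes K :: nat and n \<sigma> :: real and \<alpha> \<gamma> :: "nat \<Rightarrow> real"
  assumes "K \<ge> 2" and "\<sigma> > 0"
    and "\<forall>i<K. \<alpha> i > 0" and "\<forall>i<K. \<gamma> i > 0"
  shows "(\<forall>(\<tau>::real) (\<beta>::nat \<Rightarrow> real). \<tau> > 0 \<and> (\<forall>i<K. \<beta> i > 0) \<longrightarrow>
            I_int K \<sigma> n \<alpha> \<gamma> =
              \<tau> ^ (K - 1) * (\<Prod>l<K. \<beta> l powr \<alpha> l) *
              simplex_integral K (\<lambda>x.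
                 (\<Sum>k<K. \<beta> k powr \<sigma> * \<gamma> k * x k powr (\<sigma> * \<tau>)) powr n
                 * (\<Prod>i<K. x i powr (\<tau> * \<alpha> i - 1))
                 / (\<Sum>j<K. \<beta> j * x j powr \<tau>) powr ((\<Sum>i<K. \<alpha> i) + \<sigma> * n)))
       \<and> I_int K \<sigma> n \<alpha> \<gamma> =
           1 / (\<sigma> ^ (K - 1) * (\<Prod>l<K. \<gamma> l powr (\<alpha> l / \<sigma>))) *
           simplex_integral K (\<lambda>x.
              (\<Prod>i<K. x i powr (\<alpha> i / \<sigma> - 1))
              / (\<Sum>j<K. x j powr (1 / \<sigma>) / \<gamma> j powr (1 / \<sigma>)) powr ((\<Sum>i<K. \<alpha> i) + \<sigma> * n))"
proof -
  obtain m where K: "K = Suc m" using assms(1) by (cases K) auto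
  have P1: "\<forall>(\<tau>::real) (\<beta>::nat \<Rightarrow> real). \<tau> > 0 \<and> (\<forall>i<K. \<beta> i > 0) \<longrightarrow>
            I_int K \<sigma> n \<alpha> \<gamma> =
              \<tau> ^ (K - 1) * (\<Prod>l<K. \<beta> l powr \<alpha> l) *
              simplex_integral K (\<lambda>x.
                 (\<Sum>k<K. \<beta> k powr \<sigma> * \<gamma> k * x k powr (\<sigma> * \<tau>)) powr n
                 * (\<Prod>i<K. x i powr (\<tau> * \<alpha> i - 1))
                 / (\<Sum>j<K. \<beta> j * x j powr \<tau>) powr ((\<Sum>i<K. \<alpha> i) + \<sigma> * n))"
  proof (intro allI impI)
    fix \<tau> :: real and \<beta> :: "nat \<Rightarrow> real"
    assume h: "\<tau> > 0 \<and> (\<forall>i<K. \<beta> i > 0)"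
    have "I_int (Suc m) \<sigma> n \<alpha> \<gamma> = \<tau> ^ m * (\<Prod>l<Suc m. \<beta> l powr \<alpha> l) * simplex_integral (Suc m) (gR (Suc m) \<sigma> n \<alpha> \<gamma> \<tau> \<beta>)"
      by (rule main1) (use assms h K in auto)
    moreover have "gR (Suc m) \<sigma> n \<alpha> \<gamma> \<tau> \<beta> = (\<lambda>x.
                 (\<Sum>k<Suc m. \<beta> k powr \<sigma> * \<gamma> k * x k powr (\<sigma> * \<tau>)) powr n
                 * (\<Prod>i<Suc m. x i powr (\<tau> * \<alpha> i - 1))
                 / (\<Sum>j<Suc m. \<beta> j * x j powr \<tau>) powr ((\<Sum>i<Suc m. \<alpha> i) + \<sigma> * n))"
      by (rule ext) (simp only: gR_def)
    ultimately show "I_int K \<sigma> n \<alpha> \<gamma> =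
              \<tau> ^ (K - 1) * (\<Prod>l<K. \<beta> l powr \<alpha> l) *
              simplex_integral K (\<lambda>x.
                 (\<Sum>k<K. \<beta> k powr \<sigma> * \<gamma> k * x k powr (\<sigma> * \<tau>)) powr n
                 * (\<Prod>i<K. x i powr (\<tau> * \<alpha> i - 1))
                 / (\<Sum>j<K. \<beta> j * x j powr \<tau>) powr ((\<Sum>i<K. \<alpha> i) + \<sigma> * n))"
      unfolding K by simp
  qed
  have pos: "1 / \<sigma> > 0 \<and> (\<forall>i<K. (\<lambda>i. \<gamma> i powr (- (1 / \<sigma>))) i > 0)"
    using assms by auto
  have I2: "I_int K \<sigma> n \<alpha> \<gamma> =
      (1 / \<sigma>) ^ (K - 1) * (\<Prod>l<K. (\<gamma> l powr (- (1 / \<sigma>))) powr \<alpha> l) *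
              simplex_integral K (\<lambda>x.
                 (\<Sum>k<K. (\<gamma> k powr (- (1 / \<sigma>))) powr \<sigma> * \<gamma> k * x k powr (\<sigma> * (1 / \<sigma>))) powr n
                 * (\<Prod>i<K. x i powr (1 / \<sigma> * \<alpha> i - 1))
                 / (\<Sum>j<K. \<gamma> j powr (- (1 / \<sigma>)) * x j powr (1 / \<sigma>)) powr ((\<Sum>i<K. \<alpha> i) + \<sigma> * n))"
    using P1[rule_format, OF pos] by simp
  have SIeq: "simplex_integral K (\<lambda>x.
                 (\<Sum>k<K. (\<gamma> k powr (- (1 / \<sigma>))) powr \<sigma> * \<gamma> k * x k powr (\<sigma> * (1 / \<sigma>))) powr n
                 * (\<Prod>i<K. x i powr (1 / \<sigma> * \<alpha> i - 1))
                 / (\<Sum>j<K. \<gamma> j powr (- (1 / \<sigma>)) * x j powr (1 / \<sigma>)) powr ((\<Sum>i<K. \<alpha> i) + \<sigma> * n)) =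
      simplex_integral K (\<lambda>x.
              (\<Prod>i<K. x i powr (\<alpha> i / \<sigma> - 1))
              / (\<Sum>j<K. x j powr (1 / \<sigma>) / \<gamma> j powr (1 / \<sigma>)) powr ((\<Sum>i<K. \<alpha> i) + \<sigma> * n))"
    unfolding simplex_integral_def set_lebesgue_integral_def
  proof (intro Bochner_Integration.integral_cong refl)
    fix y :: "nat \<Rightarrow> real"
    show "indicator (simplex_dom K) y *\<^sub>R
        ((\<Sum>k<K. (\<gamma> k powr (- (1 / \<sigma>))) powr \<sigma> * \<gamma> k * simplex_pt K y k powr (\<sigma> * (1 / \<sigma>))) powr n
                 * (\<Prod>i<K. simplex_pt K y i powr (1 / \<sigma> * \<alpha> i - 1))
                 / (\<Sum>j<K. \<gamma> j powr (- (1 / \<sigma>)) * simplex_pt K y j powr (1 / \<sigma>)) powr ((\<Sum>i<K. \<alpha> i) + \<sigma> * n)) =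
        indicator (simplex_dom K) y *\<^sub>R
        ((\<Prod>i<K. simplex_pt K y i powr (\<alpha> i / \<sigma> - 1))
              / (\<Sum>j<K. simplex_pt K y j powr (1 / \<sigma>) / \<gamma> j powr (1 / \<sigma>)) powr ((\<Sum>i<K. \<alpha> i) + \<sigma> * n))"
    proof (cases "y \<in> simplex_dom K")
      case True
      have "\<forall>i<K. 0 \<le> simplex_pt K y i" using sp_nonneg[of y m] True K by simp
      moreover have "(\<Sum>i<K. simplex_pt K y i) = 1" using sp_sum[of m y] K by simp
      ultimately show ?thesis using body_eq[of K "simplex_pt K y" \<gamma> \<sigma> n \<alpha>] assms by simp
    qed simp
  qed
  show ?thesis
    using P1 I2 SIeq coef_eq[OF assms(4) assms(2), of \<alpha>] by simp
qed

end
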